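(* Consider the AR(1) setting of the context, and let $(\delta_k)_{k\ge1}$ be positive reals with $\delta_k=O(1/k)$ and $2k/\delta_k\in\mathbb N$ for each $k$. Then, with $\tau_k:=k^{-m}+\delta_k$, $$\|\pi-\widehat\pi_k\|_{TV}=O\big(|\ln\tau_k|\,\tau_k\big)\quad\text{and}\quad\int_{\mathbb R}|\mathfrak p(y)-\mathfrak p_k(y)|\,dy=O\big(|\ln\tau_k|\,\tau_k\big)\quad(k\to\infty).$$
   Context: Let $|\varrho|<1$ and let $\nu$ be a probability density on $\mathbb R$ such that: (a) $\eta_m:=\int_{\mathbb R}|x|^m\nu(x)\,dx<\infty$ for some $m\in[1,\infty)$; (b) $\nu$ is continuously differentiable and $\nu'$ is right-differentiable at every point, with right derivative $\nu''_r$; (c) $I':=\int_{\mathbb R}|\nu'(y)|\,dy<\infty$ and $M'':=\sup_{t\in\mathbb R}|\nu''_r(t)|<\infty$. The AR(1) process $X_n=\varrho X_{n-1}+\vartheta_n$ with i.i.d. innovations of density $\nu$ is a Markov chain on $\mathbb R$ with kernel $P(x,dy)=p(x,y)\,dy$, $p(x,y):=\nu(y-\varrho x)$; it has a unique invariant probability $\pi$, with density $\mathfrak p$ with respect to Lebesgue measure. Let $x_0=0$ and $V(x):=\lfloor 1+|x|^m\rfloor$. Discretization: for each integer $k\ge1$, $q_k:=2k/\delta_k$, $\mathbb X_k:=[-k,k)$, $x_{i,k}:=-k+i\delta_k$, $\mathbb X_{i,k}:=[x_{i,k},x_{i+1,k})$ for $i\in I_k:=\{0,\dots,q_k-1\}$.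 Define $m_{i,k}(f):=\int_{-k}^{k}f(y)\inf_{t\in\mathbb X_{i,k}}p(t,y)\,dy$. Let $J_k:=I_k\sqcup\{\ast\}$ and $B_k$ the $J_k\times J_k$ stochastic matrix with $B_k(i,j)=m_{i,k}(1_{\mathbb X_{j,k}})+1_{\mathbb X_{j,k}}(0)(1-m_{i,k}(1_{\mathbb R}))$ for $i,j\in I_k$, $B_k(\ast,j)=1_{\mathbb X_{j,k}}(0)$ for $j\in I_k$, $B_k(i,\ast)=0$ for all $i$. Let $\pi_k=(\pi_{i,k})_{i\in J_k}$ be any non-negative row vector with entries summing to $1$ and $\pi_kB_k=\pi_k$; set $\mathfrak p_k(y):=1_{[-k,k)}(y)\sum_{i\in I_k}\pi_{i,k}\inf_{t\in\mathbb X_{i,k}}p(t,y)$ and $\widehat\pi_k:=\mathfrak p_k(y)\,dy+(1-\int\mathfrak p_k)\delta_0$. Total variation: $\|\pi-\widehat\pi_k\|_{TV}:=\sup\{|\pi(f)-\widehat\pi_k(f)|: f \text{ measurable},\ \sup|f|\le1\}$. *)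

theory Defs
  imports "HOL-Analysis.Analysis" "HOL-Library.Landau_Symbols"
begin

text \<open>Discretization of the AR(1) kernel p(x,y) = nu(y - rho x).
  Index set J_k = I_k plus a cemetery point: Some i for i in I_k, None for the extra point.\<close>

definition grid_x :: "(nat \<Rightarrow> real) \<Rightarrow> nat \<Rightarrow> nat \<Rightarrow> real" where
  "grid_x \<delta> k i = - real k + real i * \<delta> k"

definition cell :: "(nat \<Rightarrow> real) \<Rightarrow> nat \<Rightarrow> nat \<Rightarrow> real set" where
  "cell \<delta> k i = {grid_x \<delta> k i ..< grid_x \<delta> k (Suc i)}"

text \<open>q_k = 2k/delta_k (an integer by hypothesis).\<close>
definition qnum :: "(nat \<Rightarrow> real) \<Rightarrow> nat \<Rightarrow> nat" where
  "qnum \<delta> k = nat \<lfloor>2 * real k / \<delta> k\<rfloor>"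

definition pmin :: "real \<Rightarrow> (real \<Rightarrow> real) \<Rightarrow> (nat \<Rightarrow> real) \<Rightarrow> nat \<Rightarrow> nat \<Rightarrow> real \<Rightarrow> real" where
  "pmin \<rho> \<nu> \<delta> k i y = (INF t\<in>cell \<delta> k i. \<nu> (y - \<rho> * t))"

definition mfun :: "real \<Rightarrow> (real \<Rightarrow> real) \<Rightarrow> (nat \<Rightarrow> real) \<Rightarrow> nat \<Rightarrow> nat \<Rightarrow> (real \<Rightarrow> real) \<Rightarrow> real" where
  "mfun \<rho> \<nu> \<delta> k i f =
     (\<integral>y. indicator {- real k .. real k} y * f y * pmin \<rho> \<nu> \<delta> k i y \<partial>lborel)"

definition Bmat :: "real \<Rightarrow> (real \<Rightarrow> real) \<Rightarrow> (nat \<Rightarrow> real) \<Rightarrow> nat \<Rightarrow> nat option \<Rightarrow> nat option \<Rightarrow> real" where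
  "Bmat \<rho> \<nu> \<delta> k a b =
     (case (a, b) of
        (Some i, Some j) \<Rightarrow> mfun \<rho> \<nu> \<delta> k i (indicator (cell \<delta> k j))
                            + indicator (cell \<delta> k j) (0::real) * (1 - mfun \<rho> \<nu> \<delta> k i (\<lambda>_. 1))
      | (None, Some j) \<Rightarrow> indicator (cell \<delta> k j) (0::real)
      | (_, None) \<Rightarrow> 0)"

definition Jset :: "(nat \<Rightarrow> real) \<Rightarrow> nat \<Rightarrow> nat option set" where
  "Jset \<delta> k = Some ` {..<qnum \<delta> k} \<union> {None}"

definition is_stationary :: "real \<Rightarrow> (real \<Rightarrow> real) \<Rightarrow> (nat \<Rightarrow> real) \<Rightarrow> nat \<Rightarrow> (nat option \<Rightarrow> real) \<Rightarrow> bool" where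
  "is_stationary \<rho> \<nu> \<delta> k \<pi>v \<longleftrightarrow>
     (\<forall>j\<in>Jset \<delta> k. 0 \<le> \<pi>v j) \<and> (\<Sum>j\<in>Jset \<delta> k. \<pi>v j) = 1 \<and>
     (\<forall>j\<in>Jset \<delta> k. (\<Sum>i\<in>Jset \<delta> k. \<pi>v i * Bmat \<rho> \<nu> \<delta> k i j) = \<pi>v j)"

definition pdens_k :: "real \<Rightarrow> (real \<Rightarrow> real) \<Rightarrow> (nat \<Rightarrow> real) \<Rightarrow> nat \<Rightarrow> (nat option \<Rightarrow> real) \<Rightarrow> real \<Rightarrow> real" where
  "pdens_k \<rho> \<nu> \<delta> k \<pi>v y =
     indicator {- real k ..< real k} y * (\<Sum>i<qnum \<delta> k. \<pi>v (Some i) * pmin \<rho> \<nu> \<delta> k i y)"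

text \<open>Total variation distance between pi = p(y)dy and
  hat pi = q(y)dy + (1 - int q) delta_0, written out literally.\<close>
definition tv_dist :: "(real \<Rightarrow> real) \<Rightarrow> (real \<Rightarrow> real) \<Rightarrow> real" where
  "tv_dist p q = (SUP f\<in>{f. f \<in> borel_measurable borel \<and> (\<forall>x. \<bar>f x\<bar> \<le> 1)}.
       \<bar>(\<integral>y. f y * p y \<partial>lborel)
        - ((\<integral>y. f y * q y \<partial>lborel) + (1 - (\<integral>y. q y \<partial>lborel)) * f 0)\<bar>)"

end

theory Submission imports Defs begin

lemma INF_rat_eq:
  fixes g :: "real \<Rightarrow> real"
  assumes ab: "a < b" and cont: "\<And>t. isCont g t" and nn: "\<And>t. 0 \<le> g t"
  shows "(INF t\<in>{a..<b}. g t) = (INF t\<in>{a..<b} \<inter> \<rat>. g t)"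
proof (rule antisym)
  have bdd: "bdd_below (g ` X)" for X using nn by (auto intro: bdd_belowI[of _ 0])
  obtain r0 where "r0 \<in> \<rat>" "a < r0" "r0 < b" using Rats_dense_in_real[OF ab] by blast
  then have ne: "{a..<b} \<inter> \<rat> \<noteq> {}" by (metis IntI atLeastLessThan_iff empty_iff less_imp_le)
  show "(INF t\<in>{a..<b}. g t) \<le> (INF t\<in>{a..<b} \<inter> \<rat>. g t)"
    by (rule cINF_superset_mono[OF ne bdd]) auto
  show "(INF t\<in>{a..<b} \<inter> \<rat>. g t) \<le> (INF t\<in>{a..<b}. g t)"
  proof (rule cINF_greatest)
    show "{a..<b} \<noteq> {}" using ab by simp
    fix t assume t: "t \<in> {a..<b}"
    show "(INF t\<in>{a..<b} \<inter> \<rat>. g t) \<le> g t"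
    proof (rule ccontr)
      assume "\<not> ?thesis"
      then have e: "0 < (INF t\<in>{a..<b} \<inter> \<rat>. g t) - g t" by simp
      from cont[of t] have "g \<midarrow>t\<rightarrow> g t" by (simp add: isCont_def)
      from this[unfolded LIM_eq, rule_format, OF e] obtain s where s: "0 < s"
        and sx: "\<And>x. x \<noteq> t \<and> norm (x - t) < s \<Longrightarrow> norm (g x - g t) < (INF t\<in>{a..<b} \<inter> \<rat>. g t) - g t"
        by blast
      have "t < min (t + s) b" using t s by auto
      from Rats_dense_in_real[OF this] obtain r where r: "r \<in> \<rat>" "t < r" "r < min (t + s) b" by blast
      then have rin: "r \<in> {a..<b} \<inter> \<rat>" using t by auto
      have "norm (g r - g t) < (INF t\<in>{a..<b} \<inter> \<rat>. g t) - g t"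
        using r by (intro sx) auto
      then have "g r < (INF t\<in>{a..<b} \<inter> \<rat>. g t)" by simp
      moreover have "(INF t\<in>{a..<b} \<inter> \<rat>. g t) \<le> g r" by (rule cINF_lower[OF bdd rin])
      ultimately show False by simp
    qed
  qed
qed

locale ar1 =
  fixes \<rho> m :: real and \<nu> \<nu>' \<pp> :: "real \<Rightarrow> real"
  assumes rho: "\<bar>\<rho>\<bar> < 1"
    and nu_meas[measurable]: "\<nu> \<in> borel_measurable borel"
    and nu_nonneg: "\<And>x. 0 \<le> \<nu> x"
    and nu_int: "integrable lborel \<nu>"
    and nu_one: "(\<integral>x. \<nu> x \<partial>lborel) = 1"
    and m: "1 \<le> m"
    and moment: "integrable lborel (\<lambda>x. \<bar>x\<bar> powr m * \<nu> x)"
    and nu_deriv: "\<And>x. (\<nu> has_real_derivative \<nu>' x) (at x)"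
    and nu'_cont: "continuous_on UNIV \<nu>'"
    and I': "integrable lborel (\<lambda>y. \<bar>\<nu>' y\<bar>)"
    and p_meas[measurable]: "\<pp> \<in> borel_measurable borel"
    and p_nonneg: "\<And>x. 0 \<le> \<pp> x"
    and p_int: "integrable lborel \<pp>"
    and p_one: "(\<integral>x. \<pp> x \<partial>lborel) = 1"
    and p_invariant: "\<And>A. A \<in> sets borel \<Longrightarrow>
        (\<integral>y. indicator A y * \<pp> y \<partial>lborel)
        = (\<integral>x. \<pp> x * (\<integral>y. indicator A y * \<nu> (y - \<rho> * x) \<partial>lborel) \<partial>lborel)"
begin

lemma nu'_meas[measurable]: "\<nu>' \<in> borel_measurable borel"
  using nu'_cont by (rule borel_measurable_continuous_onI)

lemma nu_shift_int: "integrable lborel (\<lambda>y. \<nu> (y - a))"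
  using lborel_integrable_real_affine[OF nu_int, of 1 "-a"] by simp

lemma nu_shift_one: "(\<integral>y. \<nu> (y - a) \<partial>lborel) = 1"
  using lborel_integral_real_affine[of 1 "\<lambda>y. \<nu> (y - a)" a] nu_one by simp

lemma bdd_int:
  assumes [measurable]: "g \<in> borel_measurable borel" and "\<And>y. \<bar>g y\<bar> \<le> B"
  shows "integrable lborel (\<lambda>y. g y * \<nu> (y - a))"
proof (rule Bochner_Integration.integrable_bound[OF integrable_mult_right[OF nu_shift_int, of B a]])
  show "AE x in lborel. norm (g x * \<nu> (x - a)) \<le> norm (B * \<nu> (x - a))"
    using assms(2) nu_nonneg by (auto simp: abs_mult intro!: mult_right_mono order_trans[OF _ abs_ge_self])
qed measurable

definition G :: "real \<Rightarrow> real \<Rightarrow> real" where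
  "G a z = (\<integral>u. (if z - a \<le> u \<and> u \<le> z + a then \<bar>\<nu>' u\<bar> else 0) \<partial>lborel)"

lemma G_alt: "G a z = (\<integral>u. indicator {z-a..z+a} u * \<bar>\<nu>' u\<bar> \<partial>lborel)"
  unfolding G_def by (rule Bochner_Integration.integral_cong) (auto split: split_indicator)

definition I1 :: real where "I1 = (\<integral>u. \<bar>\<nu>' u\<bar> \<partial>lborel)"

lemma ind_nu'_int: "integrable lborel (\<lambda>u. indicator A u * \<bar>\<nu>' u\<bar>)" if "A \<in> sets borel"
  using integrable_real_mult_indicator[of A lborel, OF _ I'] that by (simp add: mult.commute)

lemma ind_nu'_int2: "integrable lborel (\<lambda>u. indicator A u * \<nu>' u)" if [measurable]: "A \<in> sets borel"
  by (rule Bochner_Integration.integrable_bound[OF ind_nu'_int[OF that]])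
     (simp, simp add: abs_mult split: split_indicator)

lemma nu_FTC: assumes "lo \<le> hi"
  shows "\<nu> hi - \<nu> lo = (\<integral>u. indicator {lo..hi} u * \<nu>' u \<partial>lborel)"
proof -
  have "(LBINT u=lo..hi. \<nu>' u) = \<nu> hi - \<nu> lo"
  proof (rule interval_integral_FTC_finite)
    show "continuous_on {min lo hi..max lo hi} \<nu>'"
      by (rule continuous_on_subset[OF nu'_cont]) simp
    fix x show "(\<nu> has_vector_derivative \<nu>' x) (at x within {min lo hi..max lo hi})"
      using nu_deriv[of x] unfolding has_real_derivative_iff_has_vector_derivative
      by (rule has_vector_derivative_at_within)
  qed
  moreover have "(LBINT u=lo..hi. \<nu>' u) = (\<integral>u. indicator {lo..hi} u * \<nu>' u \<partial>lborel)"
    using assms unfolding interval_integral_Icc[OF assms] set_lebesgue_integral_def by simp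
  ultimately show ?thesis by simp
qed

lemma nu_diff_le: assumes "\<bar>s\<bar> \<le> a" shows "\<bar>\<nu> (z+s) - \<nu> z\<bar> \<le> G a z"
proof -
  define lo where "lo = min z (z+s)"
  define hi where "hi = max z (z+s)"
  have "\<bar>\<nu> (z+s) - \<nu> z\<bar> = \<bar>\<nu> hi - \<nu> lo\<bar>"
    unfolding lo_def hi_def by (cases "0 \<le> s") auto
  also have "\<dots> = \<bar>\<integral>u. indicator {lo..hi} u * \<nu>' u \<partial>lborel\<bar>"
    using nu_FTC[of lo hi] unfolding lo_def hi_def by linarith
  also have "\<dots> \<le> (\<integral>u. indicator {lo..hi} u * \<bar>\<nu>' u\<bar> \<partial>lborel)"
    by (rule order_trans[OF integral_abs_bound]) (simp add: abs_mult)
  also have "\<dots> \<le> G a z"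
    unfolding G_alt
    by (rule integral_mono[OF ind_nu'_int ind_nu'_int])
       (use assms in \<open>auto simp: lo_def hi_def split: split_indicator\<close>)
  finally show ?thesis .
qed

lemma G_meas[measurable]: "G a \<in> borel_measurable borel"
  unfolding G_def by measurable

lemma G_nonneg: "0 \<le> G a z"
  unfolding G_alt by (rule integral_nonneg_AE) auto

lemma I1_nonneg: "0 \<le> I1"
  unfolding I1_def by (rule integral_nonneg_AE) auto

lemma G_nn: assumes "0 \<le> a"
  shows "(\<integral>\<^sup>+z. ennreal (G a z) \<partial>lborel) = ennreal (2 * a * I1)"
proof -
  let ?f = "\<lambda>u z. (if u - a \<le> z \<and> z \<le> u + a then ennreal \<bar>\<nu>' u\<bar> else 0)"
  have "(\<integral>\<^sup>+z. ennreal (G a z) \<partial>lborel) = (\<integral>\<^sup>+z. (\<integral>\<^sup>+u. ?f u z \<partial>lborel) \<partial>lborel)"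
  proof (rule nn_integral_cong)
    fix z
    have "ennreal (G a z) = (\<integral>\<^sup>+u. ennreal (indicator {z-a..z+a} u * \<bar>\<nu>' u\<bar>) \<partial>lborel)"
      unfolding G_alt by (rule nn_integral_eq_integral[symmetric, OF ind_nu'_int]) auto
    also have "\<dots> = (\<integral>\<^sup>+u. ?f u z \<partial>lborel)"
      by (rule nn_integral_cong) (auto split: split_indicator)
    finally show "ennreal (G a z) = (\<integral>\<^sup>+u. ?f u z \<partial>lborel)" .
  qed
  also have "\<dots> = (\<integral>\<^sup>+u. (\<integral>\<^sup>+z. ?f u z \<partial>lborel) \<partial>lborel)"
    by (rule lborel_pair.Fubini') simp
  also have "\<dots> = (\<integral>\<^sup>+u. ennreal (2 * a) * ennreal \<bar>\<nu>' u\<bar> \<partial>lborel)"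
  proof (rule nn_integral_cong)
    fix u
    have "(\<integral>\<^sup>+z. ?f u z \<partial>lborel) = (\<integral>\<^sup>+z. ennreal \<bar>\<nu>' u\<bar> * indicator {u-a..u+a} z \<partial>lborel)"
      by (rule nn_integral_cong) (auto split: split_indicator)
    also have "\<dots> = ennreal \<bar>\<nu>' u\<bar> * emeasure lborel {u-a..u+a}"
      by (rule nn_integral_cmult_indicator) simp
    also have "\<dots> = ennreal (2 * a) * ennreal \<bar>\<nu>' u\<bar>"
      using assms by (simp add: mult.commute)
    finally show "(\<integral>\<^sup>+z. ?f u z \<partial>lborel) = ennreal (2 * a) * ennreal \<bar>\<nu>' u\<bar>" .
  qed
  also have "\<dots> = ennreal (2 * a) * (\<integral>\<^sup>+u. ennreal \<bar>\<nu>' u\<bar> \<partial>lborel)"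
    by (rule nn_integral_cmult) measurable
  also have "(\<integral>\<^sup>+u. ennreal \<bar>\<nu>' u\<bar> \<partial>lborel) = ennreal I1"
    unfolding I1_def by (rule nn_integral_eq_integral[OF I']) auto
  finally show ?thesis using assms I1_nonneg by (simp add: ennreal_mult)
qed

lemma G_int: assumes "0 \<le> a" shows "integrable lborel (G a)"
proof (rule integrableI_nn_integral_finite)
  show "G a \<in> borel_measurable lborel" by simp
  show "AE x in lborel. 0 \<le> G a x" by (simp add: G_nonneg)
  show "(\<integral>\<^sup>+z. ennreal (G a z) \<partial>lborel) = ennreal (2 * a * I1)" by (rule G_nn[OF assms])
qed

lemma G_integral: assumes "0 \<le> a" shows "(\<integral>z. G a z \<partial>lborel) = 2 * a * I1"
proof (rule has_bochner_integral_integral_eq, rule has_bochner_integral_nn_integral)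
  show "G a \<in> borel_measurable lborel" by simp
  show "AE x in lborel. 0 \<le> G a x" by (simp add: G_nonneg)
  show "0 \<le> 2 * a * I1" using assms I1_nonneg by simp
  show "(\<integral>\<^sup>+z. ennreal (G a z) \<partial>lborel) = ennreal (2 * a * I1)" by (rule G_nn[OF assms])
qed

lemma G_shift_int: "0 \<le> a \<Longrightarrow> integrable lborel (\<lambda>y. G a (y - b))"
  using lborel_integrable_real_affine[OF G_int, of a 1 "-b"] by simp

lemma G_shift_integral: "0 \<le> a \<Longrightarrow> (\<integral>y. G a (y - b) \<partial>lborel) = 2 * a * I1"
  using lborel_integral_real_affine[of 1 "\<lambda>y. G a (y - b)" b] G_integral by simp

lemma lip_meas:
  fixes h :: "real \<Rightarrow> real" and L :: real
  assumes "\<And>x x'. \<bar>h x - h x'\<bar> \<le> L * \<bar>x - x'\<bar>" "0 \<le> L"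
  shows "h \<in> borel_measurable borel"
proof (rule borel_measurable_continuous_onI)
  have "L-lipschitz_on UNIV h"
    by (rule lipschitz_onI) (use assms in \<open>auto simp: dist_real_def\<close>)
  then show "continuous_on UNIV h" by (rule lipschitz_on_continuous_on)
qed

definition P :: "(real \<Rightarrow> real) \<Rightarrow> real \<Rightarrow> real" where
  "P g x = (\<integral>y. g y * \<nu> (y - \<rho> * x) \<partial>lborel)"

lemma shift_L1: "(\<integral>y. \<bar>\<nu> (y - b) - \<nu> (y - b')\<bar> \<partial>lborel) \<le> 2 * \<bar>b - b'\<bar> * I1"
proof -
  have "(\<integral>y. \<bar>\<nu> (y - b) - \<nu> (y - b')\<bar> \<partial>lborel) \<le> (\<integral>y. G \<bar>b - b'\<bar> (y - b) \<partial>lborel)"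
  proof (rule integral_mono'[OF G_shift_int])
    fix y
    have "\<bar>\<nu> ((y - b) + (b - b')) - \<nu> (y - b)\<bar> \<le> G \<bar>b - b'\<bar> (y - b)"
      by (rule nu_diff_le) simp
    then show "\<bar>\<nu> (y - b) - \<nu> (y - b')\<bar> \<le> G \<bar>b - b'\<bar> (y - b)" by (simp add: abs_minus_commute)
  qed (auto simp: G_nonneg)
  also have "\<dots> = 2 * \<bar>b - b'\<bar> * I1" by (simp add: G_shift_integral)
  finally show ?thesis .
qed

lemma P_bound:
  assumes [measurable]: "g \<in> borel_measurable borel" and b: "\<And>y. \<bar>g y\<bar> \<le> B"
  shows "\<bar>P g x\<bar> \<le> B"
proof -
  have "\<bar>P g x\<bar> \<le> (\<integral>y. \<bar>g y * \<nu> (y - \<rho> * x)\<bar> \<partial>lborel)"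
    unfolding P_def by (rule integral_abs_bound)
  also have "\<dots> \<le> (\<integral>y. B * \<nu> (y - \<rho> * x) \<partial>lborel)"
    by (rule integral_mono[OF integrable_abs[OF bdd_int[OF assms]]])
       (auto simp: nu_shift_int abs_mult nu_nonneg b intro!: mult_right_mono)
  also have "\<dots> = B" by (simp add: nu_shift_one)
  finally show ?thesis .
qed

lemma P_lip:
  assumes [measurable]: "g \<in> borel_measurable borel" and b: "\<And>y. \<bar>g y\<bar> \<le> 1"
  shows "\<bar>P g x - P g x'\<bar> \<le> (2 * I1 * \<bar>\<rho>\<bar>) * \<bar>x - x'\<bar>"
proof -
  have "P g x - P g x' = (\<integral>y. g y * (\<nu> (y - \<rho> * x) - \<nu> (y - \<rho> * x')) \<partial>lborel)"
    unfolding P_def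
    by (subst Bochner_Integration.integral_diff[symmetric])
       (auto intro!: bdd_int[OF assms(1) b] simp: algebra_simps)
  also have "\<bar>\<dots>\<bar> \<le> (\<integral>y. \<bar>\<nu> (y - \<rho> * x) - \<nu> (y - \<rho> * x')\<bar> \<partial>lborel)"
  proof (rule order_trans[OF integral_abs_bound], rule integral_mono')
    show "integrable lborel (\<lambda>y. \<bar>\<nu> (y - \<rho> * x) - \<nu> (y - \<rho> * x')\<bar>)"
      by (intro integrable_abs Bochner_Integration.integrable_diff nu_shift_int)
    fix y
    show "\<bar>g y * (\<nu> (y - \<rho> * x) - \<nu> (y - \<rho> * x'))\<bar> \<le> \<bar>\<nu> (y - \<rho> * x) - \<nu> (y - \<rho> * x')\<bar>"
      using b[of y] by (simp add: abs_mult mult_left_le_one_le)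
  qed simp
  also have "\<dots> \<le> 2 * \<bar>\<rho> * x - \<rho> * x'\<bar> * I1" by (rule shift_L1)
  also have "\<dots> = (2 * I1 * \<bar>\<rho>\<bar>) * \<bar>x - x'\<bar>"
    by (simp add: abs_mult[symmetric] right_diff_distrib[symmetric])
  finally show ?thesis .
qed

lemma P_alt: "P g x = (\<integral>z. g (z + \<rho> * x) * \<nu> z \<partial>lborel)"
  unfolding P_def
  using lborel_integral_real_affine[of 1 "\<lambda>y. g y * \<nu> (y - \<rho> * x)" "\<rho> * x"]
  by (simp add: add.commute)

lemma P_lip2:
  assumes [measurable]: "g \<in> borel_measurable borel" and b: "\<And>y. \<bar>g y\<bar> \<le> 1"
    and L: "\<And>x x'. \<bar>g x - g x'\<bar> \<le> L * \<bar>x - x'\<bar>"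
  shows "\<bar>P g x - P g x'\<bar> \<le> (L * \<bar>\<rho>\<bar>) * \<bar>x - x'\<bar>"
proof -
  have int: "integrable lborel (\<lambda>z. g (z + c) * \<nu> z)" for c
    using bdd_int[of "\<lambda>z. g (z + c)" 1 0] b by simp
  have "P g x - P g x' = (\<integral>z. (g (z + \<rho> * x) - g (z + \<rho> * x')) * \<nu> z \<partial>lborel)"
    unfolding P_alt
    by (subst Bochner_Integration.integral_diff[symmetric]) (auto intro!: int simp: left_diff_distrib)
  also have "\<bar>\<dots>\<bar> \<le> (\<integral>z. (L * \<bar>\<rho>\<bar> * \<bar>x - x'\<bar>) * \<nu> z \<partial>lborel)"
  proof (rule order_trans[OF integral_abs_bound], rule integral_mono')
    show "integrable lborel (\<lambda>z. (L * \<bar>\<rho>\<bar> * \<bar>x - x'\<bar>) * \<nu> z)"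
      using nu_int by simp
    fix z
    have "\<bar>g (z + \<rho> * x) - g (z + \<rho> * x')\<bar> \<le> L * \<bar>\<rho> * x - \<rho> * x'\<bar>"
      using L[of "z + \<rho> * x" "z + \<rho> * x'"] by simp
    also have "\<dots> = L * \<bar>\<rho>\<bar> * \<bar>x - x'\<bar>"
      by (simp add: abs_mult[symmetric] right_diff_distrib[symmetric])
    finally show "\<bar>(g (z + \<rho> * x) - g (z + \<rho> * x')) * \<nu> z\<bar> \<le> (L * \<bar>\<rho>\<bar> * \<bar>x - x'\<bar>) * \<nu> z"
      by (simp add: abs_mult nu_nonneg mult_right_mono)
    have "0 \<le> L * \<bar>x - x'\<bar>" using L[of x x'] by (meson abs_ge_zero order_trans)
    then have "0 \<le> (L * \<bar>x - x'\<bar>) * (\<bar>\<rho>\<bar> * \<nu> z)"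
      by (simp add: nu_nonneg)
    then show "0 \<le> (L * \<bar>\<rho>\<bar> * \<bar>x - x'\<bar>) * \<nu> z"
      by (simp add: mult_ac)
  qed
  also have "\<dots> = (L * \<bar>\<rho>\<bar>) * \<bar>x - x'\<bar>" using nu_one by simp
  finally show ?thesis .
qed

lemma Pn_props:
  assumes [measurable]: "f \<in> borel_measurable borel" and b: "\<And>y. \<bar>f y\<bar> \<le> 1"
  shows "(P ^^ n) f \<in> borel_measurable borel \<and> (\<forall>y. \<bar>(P ^^ n) f y\<bar> \<le> 1) \<and>
         (1 \<le> n \<longrightarrow> (\<forall>x x'. \<bar>(P ^^ n) f x - (P ^^ n) f x'\<bar> \<le> (2 * I1 * \<bar>\<rho>\<bar> ^ n) * \<bar>x - x'\<bar>))"
proof (induction n)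
  case 0 then show ?case using b by simp
next
  case (Suc n)
  let ?g = "(P ^^ n) f"
  from Suc have gm[measurable]: "?g \<in> borel_measurable borel" and gb: "\<And>y. \<bar>?g y\<bar> \<le> 1" by auto
  have lip: "\<bar>P ?g x - P ?g x'\<bar> \<le> (2 * I1 * \<bar>\<rho>\<bar> ^ Suc n) * \<bar>x - x'\<bar>" for x x'
  proof (cases "n = 0")
    case True then show ?thesis using P_lip[OF gm gb, of x x'] by simp
  next
    case False
    then have "\<bar>?g x - ?g x'\<bar> \<le> (2 * I1 * \<bar>\<rho>\<bar> ^ n) * \<bar>x - x'\<bar>" for x x' using Suc by auto
    from P_lip2[OF gm gb this] show ?thesis by (simp add: mult.assoc mult.commute mult.left_commute)
  qed
  have "P ?g \<in> borel_measurable borel"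
    by (rule lip_meas[OF lip]) (simp add: I1_nonneg)
  then show ?case using lip P_bound[OF gm gb] by simp
qed


subsection \<open>Moments\<close>

definition eta :: real where "eta = (\<integral>x. \<bar>x\<bar> powr m * \<nu> x \<partial>lborel)"
definition eps :: real where "eps = (1 - \<bar>\<rho>\<bar>) / 2"
definition rr :: real where "rr = (1 + \<bar>\<rho>\<bar>) / 2"
definition lam :: real where "lam = rr powr m"
definition Lc :: real where "Lc = ((1 + 1 / eps) powr m) * eta"

lemma eps_pos: "0 < eps" using rho by (simp add: eps_def)
lemma rr_pos: "0 < rr" and rr_less: "rr < 1" using rho by (auto simp: rr_def)
lemma lam_nonneg: "0 \<le> lam" by (simp add: lam_def)
lemma lam_less: "lam < 1"
proof -
  have "rr powr m \<le> rr powr 1"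
    using rr_pos rr_less m by (intro powr_mono') auto
  then show ?thesis using rr_pos rr_less by (simp add: lam_def)
qed
lemma eta_nonneg: "0 \<le> eta" unfolding eta_def by (rule integral_nonneg_AE) (auto simp: nu_nonneg)
lemma Lc_nonneg: "0 \<le> Lc" unfolding Lc_def using eta_nonneg by simp

lemma pow_split:
  assumes "0 \<le> u" "0 \<le> v" "0 < e"
  shows "(u + v) powr m \<le> ((1 + e) * u) powr m + ((1 + 1 / e) * v) powr m"
proof (cases "v \<le> e * u")
  case True
  then have "(u + v) powr m \<le> ((1 + e) * u) powr m"
    using assms m by (intro powr_mono2) (auto simp: algebra_simps)
  then show ?thesis by (smt (verit) powr_ge_zero)
next
  case False
  then have "u \<le> v / e" using assms by (simp add: field_simps)
  then have "u + v \<le> (1 + 1 / e) * v" by (simp add: algebra_simps)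
  then have "(u + v) powr m \<le> ((1 + 1 / e) * v) powr m"
    using assms m by (intro powr_mono2) auto
  then show ?thesis by (smt (verit) powr_ge_zero)
qed

lemma mom_shift_int: "integrable lborel (\<lambda>y. \<bar>y - a\<bar> powr m * \<nu> (y - a))"
  using lborel_integrable_real_affine[OF moment, of 1 "-a"] by simp

lemma mom_shift: "(\<integral>y. \<bar>y - a\<bar> powr m * \<nu> (y - a) \<partial>lborel) = eta"
  using lborel_integral_real_affine[of 1 "\<lambda>y. \<bar>y - a\<bar> powr m * \<nu> (y - a)" a] unfolding eta_def by simp

lemma W_pt: "\<bar>y\<bar> powr m * \<nu> (y - \<rho> * x) \<le>
   lam * \<bar>x\<bar> powr m * \<nu> (y - \<rho> * x) + ((1 + 1 / eps) powr m) * (\<bar>y - \<rho> * x\<bar> powr m * \<nu> (y - \<rho> * x))"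
proof -
  have "\<bar>y\<bar> powr m \<le> (\<bar>\<rho> * x\<bar> + \<bar>y - \<rho> * x\<bar>) powr m"
    using m by (intro powr_mono2) auto
  also have "\<dots> \<le> ((1 + eps) * \<bar>\<rho> * x\<bar>) powr m + ((1 + 1 / eps) * \<bar>y - \<rho> * x\<bar>) powr m"
    using eps_pos by (intro pow_split) auto
  also have "((1 + eps) * \<bar>\<rho> * x\<bar>) powr m \<le> (rr * \<bar>x\<bar>) powr m"
  proof (intro powr_mono2)
    have "rr - (1 + eps) * \<bar>\<rho>\<bar> = (1 - \<bar>\<rho>\<bar>)^2 / 2"
      unfolding rr_def eps_def by (simp add: power2_eq_square field_simps)
    moreover have "0 \<le> (1 - \<bar>\<rho>\<bar>)^2 / 2" by simp
    ultimately have "(1 + eps) * \<bar>\<rho>\<bar> \<le> rr" by linarith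
    then show "(1 + eps) * \<bar>\<rho> * x\<bar> \<le> rr * \<bar>x\<bar>"
      by (simp add: abs_mult mult.assoc[symmetric] mult_right_mono)
  qed (use m eps_pos in auto)
  also have "(rr * \<bar>x\<bar>) powr m = lam * \<bar>x\<bar> powr m"
    using rr_pos by (simp add: lam_def powr_mult)
  also have "((1 + 1 / eps) * \<bar>y - \<rho> * x\<bar>) powr m = (1 + 1 / eps) powr m * \<bar>y - \<rho> * x\<bar> powr m"
    using eps_pos by (simp add: powr_mult)
  finally have "\<bar>y\<bar> powr m \<le> lam * \<bar>x\<bar> powr m + (1 + 1 / eps) powr m * \<bar>y - \<rho> * x\<bar> powr m"
    by simp
  then have "\<bar>y\<bar> powr m * \<nu> (y - \<rho> * x) \<le>
     (lam * \<bar>x\<bar> powr m + (1 + 1 / eps) powr m * \<bar>y - \<rho> * x\<bar> powr m) * \<nu> (y - \<rho> * x)"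
    by (rule mult_right_mono) (rule nu_nonneg)
  then show ?thesis by (simp only: distrib_right mult.assoc)
qed

lemma W_int: "integrable lborel (\<lambda>y. \<bar>y\<bar> powr m * \<nu> (y - \<rho> * x))"
proof (rule Bochner_Integration.integrable_bound)
  show "integrable lborel (\<lambda>y. lam * \<bar>x\<bar> powr m * \<nu> (y - \<rho> * x) +
          ((1 + 1 / eps) powr m) * (\<bar>y - \<rho> * x\<bar> powr m * \<nu> (y - \<rho> * x)))"
    by (intro Bochner_Integration.integrable_add integrable_mult_right nu_shift_int mom_shift_int)
  show "AE y in lborel. norm (\<bar>y\<bar> powr m * \<nu> (y - \<rho> * x)) \<le> norm (lam * \<bar>x\<bar> powr m * \<nu> (y - \<rho> * x) +
          ((1 + 1 / eps) powr m) * (\<bar>y - \<rho> * x\<bar> powr m * \<nu> (y - \<rho> * x)))"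
    using W_pt by (auto simp: nu_nonneg intro!: order_trans[OF W_pt] abs_ge_self)
qed simp

lemma W_bound: "(\<integral>y. \<bar>y\<bar> powr m * \<nu> (y - \<rho> * x) \<partial>lborel) \<le> lam * \<bar>x\<bar> powr m + Lc"
proof -
  have "(\<integral>y. \<bar>y\<bar> powr m * \<nu> (y - \<rho> * x) \<partial>lborel) \<le>
     (\<integral>y. lam * \<bar>x\<bar> powr m * \<nu> (y - \<rho> * x) +
          ((1 + 1 / eps) powr m) * (\<bar>y - \<rho> * x\<bar> powr m * \<nu> (y - \<rho> * x)) \<partial>lborel)"
    by (intro integral_mono W_int W_pt Bochner_Integration.integrable_add integrable_mult_right nu_shift_int mom_shift_int)
  also have "\<dots> = lam * \<bar>x\<bar> powr m + Lc"
    by (subst Bochner_Integration.integral_add)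
       (auto intro!: integrable_mult_right nu_shift_int mom_shift_int simp: nu_shift_one mom_shift Lc_def)
  finally show ?thesis .
qed

definition eta1 :: real where "eta1 = (\<integral>x. \<bar>x\<bar> * \<nu> x \<partial>lborel)"

lemma abs_le_powr: "\<bar>x\<bar> \<le> 1 + \<bar>x\<bar> powr m"
proof (cases "\<bar>x\<bar> \<le> 1")
  case False
  then have "\<bar>x\<bar> powr 1 \<le> \<bar>x\<bar> powr m" using m by (intro powr_mono) auto
  then show ?thesis using False by simp
qed (simp add: add_increasing2)

lemma mom1_int: "integrable lborel (\<lambda>x. \<bar>x\<bar> * \<nu> x)"
proof (rule Bochner_Integration.integrable_bound)
  show "integrable lborel (\<lambda>x. \<nu> x + \<bar>x\<bar> powr m * \<nu> x)"
    by (intro Bochner_Integration.integrable_add nu_int moment)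
  show "AE x in lborel. norm (\<bar>x\<bar> * \<nu> x) \<le> norm (\<nu> x + \<bar>x\<bar> powr m * \<nu> x)"
    using abs_le_powr nu_nonneg
    by (auto simp: abs_mult intro!: order_trans[OF _ abs_ge_self]
        order_trans[OF mult_right_mono[OF abs_le_powr]] simp: distrib_right)
qed simp

lemma eta1_nonneg: "0 \<le> eta1" unfolding eta1_def by (rule integral_nonneg_AE) (auto simp: nu_nonneg)

lemma mom1_shift_int: "integrable lborel (\<lambda>y. \<bar>y - a\<bar> * \<nu> (y - a))"
  using lborel_integrable_real_affine[OF mom1_int, of 1 "-a"] by simp

lemma mom1_shift: "(\<integral>y. \<bar>y - a\<bar> * \<nu> (y - a) \<partial>lborel) = eta1"
  using lborel_integral_real_affine[of 1 "\<lambda>y. \<bar>y - a\<bar> * \<nu> (y - a)" a] unfolding eta1_def by simp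

lemma abs_nu_int: "integrable lborel (\<lambda>y. \<bar>y\<bar> * \<nu> (y - a))"
proof (rule Bochner_Integration.integrable_bound)
  show "integrable lborel (\<lambda>y. \<bar>a\<bar> * \<nu> (y - a) + \<bar>y - a\<bar> * \<nu> (y - a))"
    by (intro Bochner_Integration.integrable_add integrable_mult_right nu_shift_int mom1_shift_int)
  show "AE y in lborel. norm (\<bar>y\<bar> * \<nu> (y - a)) \<le> norm (\<bar>a\<bar> * \<nu> (y - a) + \<bar>y - a\<bar> * \<nu> (y - a))"
    using nu_nonneg by (auto simp: abs_mult simp flip: distrib_right intro!: mult_right_mono)
qed simp

lemma abs_nu_bound: "(\<integral>y. \<bar>y\<bar> * \<nu> (y - a) \<partial>lborel) \<le> \<bar>a\<bar> + eta1"
proof -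
  have "(\<integral>y. \<bar>y\<bar> * \<nu> (y - a) \<partial>lborel) \<le> (\<integral>y. \<bar>a\<bar> * \<nu> (y - a) + \<bar>y - a\<bar> * \<nu> (y - a) \<partial>lborel)"
    by (intro integral_mono abs_nu_int Bochner_Integration.integrable_add integrable_mult_right
        nu_shift_int mom1_shift_int)
       (use nu_nonneg in \<open>auto simp flip: distrib_right intro!: mult_right_mono\<close>)
  also have "\<dots> = \<bar>a\<bar> + eta1"
    by (subst Bochner_Integration.integral_add)
       (auto intro!: integrable_mult_right nu_shift_int mom1_shift_int simp: nu_shift_one mom1_shift)
  finally show ?thesis .
qed


subsection \<open>Invariance of pi\<close>

definition K :: "real \<Rightarrow> real" where "K y = (\<integral>x. \<pp> x * \<nu> (y - \<rho> * x) \<partial>lborel)"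

lemma K_meas[measurable]: "K \<in> borel_measurable borel"
  unfolding K_def by measurable

lemma K_nonneg: "0 \<le> K y"
  unfolding K_def by (rule integral_nonneg_AE) (auto simp: p_nonneg nu_nonneg)

lemma fub_int:
  assumes [measurable]: "g \<in> borel_measurable borel" and b: "\<And>y. \<bar>g y\<bar> \<le> B"
  shows "integrable (lborel \<Otimes>\<^sub>M lborel) (\<lambda>(x, y). \<pp> x * (g y * \<nu> (y - \<rho> * x)))"
proof (rule lborel_pair.Fubini_integrable)
  show "(\<lambda>(x, y). \<pp> x * (g y * \<nu> (y - \<rho> * x))) \<in> borel_measurable (lborel \<Otimes>\<^sub>M lborel)"
    by measurable
  show "AE x in lborel. integrable lborel (\<lambda>y. case (x, y) of (x, y) \<Rightarrow> \<pp> x * (g y * \<nu> (y - \<rho> * x)))"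
    using bdd_int[OF assms] by simp
  show "integrable lborel (\<lambda>x. \<integral>y. norm (case (x, y) of (x, y) \<Rightarrow> \<pp> x * (g y * \<nu> (y - \<rho> * x))) \<partial>lborel)"
  proof (rule Bochner_Integration.integrable_bound[OF integrable_mult_right[OF p_int, of B]])
    show "(\<lambda>x. \<integral>y. norm (case (x, y) of (x, y) \<Rightarrow> \<pp> x * (g y * \<nu> (y - \<rho> * x))) \<partial>lborel)
       \<in> borel_measurable lborel" by measurable
    show "AE x in lborel. norm (\<integral>y. norm (case (x, y) of (x, y) \<Rightarrow> \<pp> x * (g y * \<nu> (y - \<rho> * x))) \<partial>lborel)
        \<le> norm (B * \<pp> x)"
    proof (rule AE_I2)
      fix x
      have gm: "(\<lambda>y. \<bar>g y\<bar>) \<in> borel_measurable borel" by measurable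
      have "(\<integral>y. norm (case (x, y) of (x, y) \<Rightarrow> \<pp> x * (g y * \<nu> (y - \<rho> * x))) \<partial>lborel)
          = \<pp> x * P (\<lambda>y. \<bar>g y\<bar>) x"
        unfolding P_def by (simp add: abs_mult p_nonneg nu_nonneg)
      also have "\<dots> \<le> \<pp> x * B"
        using P_bound[OF gm, of B x] b by (auto intro!: mult_left_mono simp: p_nonneg)
      finally show "norm (\<integral>y. norm (case (x, y) of (x, y) \<Rightarrow> \<pp> x * (g y * \<nu> (y - \<rho> * x))) \<partial>lborel)
        \<le> norm (B * \<pp> x)"
        using p_nonneg[of x] by (simp add: mult.commute order_trans[OF _ abs_ge_self]
           integral_nonneg_AE)
    qed
  qed
qed

lemma fub_eq:
  assumes [measurable]: "g \<in> borel_measurable borel" and b: "\<And>y. \<bar>g y\<bar> \<le> B"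
  shows "(\<integral>x. \<pp> x * P g x \<partial>lborel) = (\<integral>y. g y * K y \<partial>lborel)"
proof -
  have "(\<integral>x. \<pp> x * P g x \<partial>lborel) = (\<integral>x. (\<integral>y. \<pp> x * (g y * \<nu> (y - \<rho> * x)) \<partial>lborel) \<partial>lborel)"
    unfolding P_def by simp
  also have "\<dots> = (\<integral>y. (\<integral>x. \<pp> x * (g y * \<nu> (y - \<rho> * x)) \<partial>lborel) \<partial>lborel)"
    by (rule lborel_pair.Fubini_integral[symmetric]) (use fub_int[OF assms] in simp)
  also have "\<dots> = (\<integral>y. g y * K y \<partial>lborel)"
    unfolding K_def
    by (rule Bochner_Integration.integral_cong)
       (simp_all add: mult.left_commute[of "\<pp> _"])
  finally show ?thesis .
qed

lemma K_int: "integrable lborel K"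
proof -
  have "integrable lborel (\<lambda>y. \<integral>x. \<pp> x * ((\<lambda>_. 1::real) y * \<nu> (y - \<rho> * x)) \<partial>lborel)"
    using lborel_pair.integrable_snd[of "\<lambda>x y. \<pp> x * ((\<lambda>_. 1::real) y * \<nu> (y - \<rho> * x))"]
      fub_int[of "\<lambda>_. 1" 1] by simp
  then show ?thesis unfolding K_def by simp
qed

lemma dens_eq: "density lborel (\<lambda>x. ennreal (\<pp> x)) = density lborel (\<lambda>x. ennreal (K x))"
proof (rule measure_eqI)
  show "sets (density lborel (\<lambda>x. ennreal (\<pp> x))) = sets (density lborel (\<lambda>x. ennreal (K x)))"
    by simp
  fix A assume "A \<in> sets (density lborel (\<lambda>x. ennreal (\<pp> x)))"
  then have A[measurable]: "A \<in> sets borel" by simp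
  have ind: "indicator A \<in> borel_measurable borel" "\<And>y. \<bar>indicator A y :: real\<bar> \<le> 1"
    by (auto split: split_indicator)
  have eq: "(\<integral>y. indicator A y * \<pp> y \<partial>lborel) = (\<integral>y. indicator A y * K y \<partial>lborel)"
    using p_invariant[OF A] fub_eq[OF ind] unfolding P_def by simp
  have "emeasure (density lborel (\<lambda>x. ennreal (\<pp> x))) A = (\<integral>\<^sup>+y. ennreal (indicator A y * \<pp> y) \<partial>lborel)"
    by (subst emeasure_density) (auto intro!: nn_integral_cong split: split_indicator)
  also have "\<dots> = ennreal (\<integral>y. indicator A y * \<pp> y \<partial>lborel)"
    using integrable_real_mult_indicator[of A lborel, OF _ p_int]
    by (intro nn_integral_eq_integral) (auto simp: mult.commute p_nonneg)
  also have "\<dots> = ennreal (\<integral>y. indicator A y * K y \<partial>lborel)" by (simp add: eq)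
  also have "\<dots> = (\<integral>\<^sup>+y. ennreal (indicator A y * K y) \<partial>lborel)"
    using integrable_real_mult_indicator[of A lborel, OF _ K_int]
    by (intro nn_integral_eq_integral[symmetric]) (auto simp: mult.commute K_nonneg)
  also have "\<dots> = emeasure (density lborel (\<lambda>x. ennreal (K x))) A"
    by (subst emeasure_density) (auto intro!: nn_integral_cong split: split_indicator)
  finally show "emeasure (density lborel (\<lambda>x. ennreal (\<pp> x))) A = emeasure (density lborel (\<lambda>x. ennreal (K x))) A" .
qed

lemma pi_inv:
  assumes [measurable]: "g \<in> borel_measurable borel" and b: "\<And>y. \<bar>g y\<bar> \<le> B"
  shows "(\<integral>y. g y * \<pp> y \<partial>lborel) = (\<integral>y. P g y * \<pp> y \<partial>lborel)"
proof -
  have "(\<integral>y. g y * \<pp> y \<partial>lborel) = (\<integral>y. g y \<partial>density lborel (\<lambda>x. ennreal (\<pp> x)))"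
    by (subst integral_density) (auto simp: p_nonneg mult.commute)
  also have "\<dots> = (\<integral>y. g y \<partial>density lborel (\<lambda>x. ennreal (K x)))" by (simp add: dens_eq)
  also have "\<dots> = (\<integral>y. g y * K y \<partial>lborel)"
    by (subst integral_density) (auto simp: K_nonneg mult.commute)
  also have "\<dots> = (\<integral>x. \<pp> x * P g x \<partial>lborel)" by (rule fub_eq[OF assms, symmetric])
  finally show ?thesis by (simp add: mult.commute)
qed

lemma pi_inv_iter:
  assumes [measurable]: "g \<in> borel_measurable borel" and b: "\<And>y. \<bar>g y\<bar> \<le> 1"
  shows "(\<integral>y. g y * \<pp> y \<partial>lborel) = (\<integral>y. (P ^^ n) g y * \<pp> y \<partial>lborel)"
proof (induction n)
  case (Suc n)
  have "(P ^^ n) g \<in> borel_measurable borel" "\<And>y. \<bar>(P ^^ n) g y\<bar> \<le> 1"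
    using Pn_props[OF assms] by auto
  from pi_inv[OF this] Suc show ?case by simp
qed simp


subsection \<open>First moment of pi\<close>

lemma bdd_int_p:
  assumes [measurable]: "g \<in> borel_measurable borel" and "\<And>y. \<bar>g y\<bar> \<le> B"
  shows "integrable lborel (\<lambda>y. g y * \<pp> y)"
proof (rule Bochner_Integration.integrable_bound[OF integrable_mult_right[OF p_int, of B]])
  show "AE x in lborel. norm (g x * \<pp> x) \<le> norm (B * \<pp> x)"
    using assms(2) p_nonneg by (auto simp: abs_mult intro!: mult_right_mono order_trans[OF _ abs_ge_self])
qed measurable

definition Cm :: real where "Cm = eta1 / (1 - \<bar>\<rho>\<bar>)"

lemma Cm_nonneg: "0 \<le> Cm" using rho eta1_nonneg by (simp add: Cm_def)

lemma geom_le: "(\<Sum>j<n. \<bar>\<rho>\<bar> ^ j) \<le> 1 / (1 - \<bar>\<rho>\<bar>)"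
proof -
  have "(\<Sum>j<n. \<bar>\<rho>\<bar> ^ j) = (1 - \<bar>\<rho>\<bar> ^ n) / (1 - \<bar>\<rho>\<bar>)"
    using rho by (subst sum_gp_strict) auto
  also have "\<dots> \<le> 1 / (1 - \<bar>\<rho>\<bar>)"
    using rho by (intro divide_right_mono) auto
  finally show ?thesis .
qed

lemma Pn_trunc:
  assumes M: "0 < M"
  shows "(P ^^ n) (\<lambda>y. min \<bar>y\<bar> M / M) x \<le> (\<bar>\<rho>\<bar> ^ n * \<bar>x\<bar> + eta1 * (\<Sum>j<n. \<bar>\<rho>\<bar> ^ j)) / M"
proof (induction n arbitrary: x)
  case 0 then show ?case using M by (simp add: divide_right_mono)
next
  case (Suc n)
  let ?f = "\<lambda>y. min \<bar>y\<bar> M / M"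
  have fm: "?f \<in> borel_measurable borel" by measurable
  have fb: "\<And>y. \<bar>?f y\<bar> \<le> 1" using M by (auto simp: abs_div)
  let ?g = "(P ^^ n) ?f"
  have gm[measurable]: "?g \<in> borel_measurable borel" and gb: "\<And>y. \<bar>?g y\<bar> \<le> 1"
    using Pn_props[OF fm fb] by auto
  let ?a = "\<bar>\<rho>\<bar> ^ n" and ?b = "eta1 * (\<Sum>j<n. \<bar>\<rho>\<bar> ^ j)"
  have "(P ^^ Suc n) ?f x = P ?g x" by simp
  also have "\<dots> \<le> (\<integral>y. (?a / M) * (\<bar>y\<bar> * \<nu> (y - \<rho> * x)) + (?b / M) * \<nu> (y - \<rho> * x) \<partial>lborel)"
    unfolding P_def[of ?g x]
  proof (rule integral_mono)
    show "integrable lborel (\<lambda>y. ?g y * \<nu> (y - \<rho> * x))" by (rule bdd_int[OF gm gb])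
    show "integrable lborel (\<lambda>y. (?a / M) * (\<bar>y\<bar> * \<nu> (y - \<rho> * x)) + (?b / M) * \<nu> (y - \<rho> * x))"
      by (intro Bochner_Integration.integrable_add integrable_mult_right abs_nu_int nu_shift_int)
    fix y
    have "?g y \<le> (?a * \<bar>y\<bar> + ?b) / M" by (rule Suc)
    then have "?g y * \<nu> (y - \<rho> * x) \<le> ((?a * \<bar>y\<bar> + ?b) / M) * \<nu> (y - \<rho> * x)"
      by (rule mult_right_mono) (rule nu_nonneg)
    then show "?g y * \<nu> (y - \<rho> * x) \<le> (?a / M) * (\<bar>y\<bar> * \<nu> (y - \<rho> * x)) + (?b / M) * \<nu> (y - \<rho> * x)"
      by (simp add: add_divide_distrib distrib_right)
  qed
  also have "\<dots> = (?a / M) * (\<integral>y. \<bar>y\<bar> * \<nu> (y - \<rho> * x) \<partial>lborel) + ?b / M"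
    by (subst Bochner_Integration.integral_add)
       (auto intro!: integrable_mult_right abs_nu_int nu_shift_int simp: nu_shift_one)
  also have "\<dots> \<le> (?a / M) * (\<bar>\<rho> * x\<bar> + eta1) + ?b / M"
    using M by (intro add_right_mono mult_left_mono abs_nu_bound) auto
  also have "\<dots> = (\<bar>\<rho>\<bar> ^ Suc n * \<bar>x\<bar> + eta1 * (\<Sum>j<Suc n. \<bar>\<rho>\<bar> ^ j)) / M"
    by (simp add: abs_mult algebra_simps add_divide_distrib)
  finally show ?case .
qed

lemma pi_trunc:
  assumes M: "0 < M"
  shows "(\<integral>y. min \<bar>y\<bar> M * \<pp> y \<partial>lborel) \<le> Cm"
proof -
  let ?f = "\<lambda>y. min \<bar>y\<bar> M / M"
  have fm[measurable]: "?f \<in> borel_measurable borel" by measurable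
  have fb: "\<And>y. \<bar>?f y\<bar> \<le> 1" using M by (auto simp: abs_div)
  define s where "s n y = min 1 (\<bar>\<rho>\<bar> ^ n * \<bar>y\<bar> / M) * \<pp> y" for n y
  have sm[measurable]: "s n \<in> borel_measurable borel" for n unfolding s_def by measurable
  have mb: "\<bar>min 1 (\<bar>\<rho>\<bar> ^ n * \<bar>y\<bar> / M)\<bar> \<le> 1" for n y
  proof -
    have "0 \<le> \<bar>\<rho>\<bar> ^ n * \<bar>y\<bar> / M" using M by simp
    then show ?thesis by (simp add: min_def)
  qed
  have sint: "integrable lborel (s n)" for n
    unfolding s_def by (rule bdd_int_p[where B=1]) (auto simp: mb)
  have AE1: "AE y in lborel. (\<lambda>n. s n y) \<longlonglongrightarrow> 0"
  proof (rule AE_I2)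
    fix y
    have "(\<lambda>n. \<bar>\<rho>\<bar> ^ n * \<bar>y\<bar> / M) \<longlonglongrightarrow> 0 * \<bar>y\<bar> / M"
      using rho M by (intro tendsto_intros) auto
    then have "(\<lambda>n. min 1 (\<bar>\<rho>\<bar> ^ n * \<bar>y\<bar> / M) * \<pp> y) \<longlonglongrightarrow> min 1 (0 * \<bar>y\<bar> / M) * \<pp> y"
      using rho M by (intro tendsto_intros) auto
    then show "(\<lambda>n. s n y) \<longlonglongrightarrow> 0" by (simp add: s_def)
  qed
  have AE2: "AE y in lborel. norm (s n y) \<le> \<pp> y" for n
    using M p_nonneg by (auto simp: s_def abs_mult intro!: mult_left_le_one_le)
  have lim: "(\<lambda>n. \<integral>y. s n y \<partial>lborel) \<longlonglongrightarrow> (\<integral>y. 0 \<partial>lborel)"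
    using Bochner_Integration.integral_dominated_convergence[of "\<lambda>y. 0" lborel s \<pp>] AE1 AE2
    by (simp add: p_int)
  have bound: "(\<integral>y. ?f y * \<pp> y \<partial>lborel) \<le> (\<integral>y. s n y \<partial>lborel) + Cm / M" for n
  proof -
    have "(\<integral>y. ?f y * \<pp> y \<partial>lborel) = (\<integral>y. (P ^^ n) ?f y * \<pp> y \<partial>lborel)"
      by (rule pi_inv_iter[OF fm fb])
    also have "\<dots> \<le> (\<integral>y. s n y + Cm / M * \<pp> y \<partial>lborel)"
    proof (rule integral_mono)
      have gm: "(P ^^ n) ?f \<in> borel_measurable borel" and gb: "\<And>y. \<bar>(P ^^ n) ?f y\<bar> \<le> 1"
        using Pn_props[OF fm fb] by auto
      show "integrable lborel (\<lambda>y. (P ^^ n) ?f y * \<pp> y)" by (rule bdd_int_p[OF gm gb])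
      show "integrable lborel (\<lambda>y. s n y + Cm / M * \<pp> y)"
        unfolding s_def
        by (intro Bochner_Integration.integrable_add integrable_mult_right p_int bdd_int_p[where B=1])
           (auto simp: M mb)
      fix y
      have g1: "(P ^^ n) ?f y \<le> 1" using gb[of y] by simp
      have "(P ^^ n) ?f y \<le> (\<bar>\<rho>\<bar> ^ n * \<bar>y\<bar> + eta1 * (\<Sum>j<n. \<bar>\<rho>\<bar> ^ j)) / M"
        by (rule Pn_trunc[OF M])
      also have "\<dots> \<le> \<bar>\<rho>\<bar> ^ n * \<bar>y\<bar> / M + Cm / M"
      proof -
        have "eta1 * (\<Sum>j<n. \<bar>\<rho>\<bar> ^ j) \<le> eta1 * (1 / (1 - \<bar>\<rho>\<bar>))"
          using geom_le[of n] eta1_nonneg by (rule mult_left_mono)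
        then have "eta1 * (\<Sum>j<n. \<bar>\<rho>\<bar> ^ j) \<le> Cm" by (simp add: Cm_def)
        then have "eta1 * (\<Sum>j<n. \<bar>\<rho>\<bar> ^ j) / M \<le> Cm / M"
          using M by (intro divide_right_mono) auto
        then show ?thesis by (simp add: add_divide_distrib)
      qed
      finally have "(P ^^ n) ?f y \<le> min 1 (\<bar>\<rho>\<bar> ^ n * \<bar>y\<bar> / M) + Cm / M"
        using g1 divide_nonneg_pos[OF Cm_nonneg M] unfolding min_def by auto
      then have "(P ^^ n) ?f y * \<pp> y \<le> (min 1 (\<bar>\<rho>\<bar> ^ n * \<bar>y\<bar> / M) + Cm / M) * \<pp> y"
        using p_nonneg[of y] by (rule mult_right_mono)
      then show "(P ^^ n) ?f y * \<pp> y \<le> s n y + Cm / M * \<pp> y"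
        unfolding s_def by (simp only: distrib_right)
    qed
    also have "\<dots> = (\<integral>y. s n y \<partial>lborel) + Cm / M"
      by (subst Bochner_Integration.integral_add)
         (auto simp: p_one p_int sint)
    finally show ?thesis .
  qed
  have "(\<integral>y. ?f y * \<pp> y \<partial>lborel) \<le> 0 + Cm / M"
  proof (rule LIMSEQ_le_const)
    show "(\<lambda>n. (\<integral>y. s n y \<partial>lborel) + Cm / M) \<longlonglongrightarrow> 0 + Cm / M"
      using lim by (intro tendsto_add tendsto_const) simp
    show "\<exists>N. \<forall>n\<ge>N. (\<integral>y. ?f y * \<pp> y \<partial>lborel) \<le> (\<integral>y. s n y \<partial>lborel) + Cm / M"
      using bound by blast
  qed
  then have "(\<integral>y. min \<bar>y\<bar> M * \<pp> y \<partial>lborel) / M \<le> Cm / M"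
    by (simp add: integral_divide_zero)
  then show ?thesis using M by (simp add: divide_right_mono_neg divide_le_cancel)
qed

lemma pi_mom: "integrable lborel (\<lambda>y. \<bar>y\<bar> * \<pp> y)"
proof -
  define f where "f n y = min \<bar>y\<bar> (real (Suc n)) * \<pp> y" for n y
  have fint: "integrable lborel (f n)" for n
    unfolding f_def by (rule bdd_int_p[where B = "real (Suc n)"]) auto
  have inc: "incseq (\<lambda>n. \<integral>y. f n y \<partial>lborel)"
    by (rule incseq_SucI, rule integral_mono[OF fint fint])
       (auto simp: f_def p_nonneg intro!: mult_right_mono)
  have bdd: "bdd_above (range (\<lambda>n. \<integral>y. f n y \<partial>lborel))"
    by (rule bdd_aboveI[of _ Cm]) (auto simp: f_def intro!: pi_trunc)
  show ?thesis
  proof (rule integrable_monotone_convergence[OF fint])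
    show "AE y in lborel. mono (\<lambda>n. f n y)"
      by (auto simp: f_def mono_def p_nonneg intro!: mult_right_mono)
    show "AE y in lborel. (\<lambda>n. f n y) \<longlonglongrightarrow> \<bar>y\<bar> * \<pp> y"
    proof (rule AE_I2, rule tendsto_eventually)
      fix y
      obtain N :: nat where "\<bar>y\<bar> \<le> real N" using real_arch_simple by blast
      then show "\<forall>\<^sub>F n in sequentially. f n y = \<bar>y\<bar> * \<pp> y"
        unfolding eventually_sequentially by (intro exI[of _ N]) (auto simp: f_def)
    qed
    show "(\<lambda>n. \<integral>y. f n y \<partial>lborel) \<longlonglongrightarrow> (SUP n. \<integral>y. f n y \<partial>lborel)"
      by (rule LIMSEQ_incseq_SUP[OF bdd inc])
  qed measurable
qed

definition Mpi :: real where "Mpi = (\<integral>y. \<bar>y\<bar> * \<pp> y \<partial>lborel)"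

lemma Mpi_nonneg: "0 \<le> Mpi" unfolding Mpi_def by (rule integral_nonneg_AE) (auto simp: p_nonneg)


lemma pi_lip:
  assumes [measurable]: "h \<in> borel_measurable borel" and b: "\<And>y. \<bar>h y\<bar> \<le> 1"
    and L: "\<And>x x'. \<bar>h x - h x'\<bar> \<le> L * \<bar>x - x'\<bar>"
  shows "\<bar>(\<integral>y. h y * \<pp> y \<partial>lborel) - h 0\<bar> \<le> L * Mpi"
proof -
  have "(\<integral>y. h y * \<pp> y \<partial>lborel) - h 0 = (\<integral>y. (h y - h 0) * \<pp> y \<partial>lborel)"
    using bdd_int_p[OF assms(1,2)] p_int p_one
    by (simp add: left_diff_distrib Bochner_Integration.integral_diff)
  also have "\<bar>\<dots>\<bar> \<le> (\<integral>y. L * (\<bar>y\<bar> * \<pp> y) \<partial>lborel)"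
  proof (rule order_trans[OF integral_abs_bound], rule integral_mono')
    show "integrable lborel (\<lambda>y. L * (\<bar>y\<bar> * \<pp> y))" using pi_mom by simp
    fix y
    have "\<bar>h y - h 0\<bar> \<le> L * \<bar>y\<bar>" using L[of y 0] by simp
    then show "\<bar>(h y - h 0) * \<pp> y\<bar> \<le> L * (\<bar>y\<bar> * \<pp> y)"
      using p_nonneg[of y] by (simp add: abs_mult mult.assoc[symmetric] mult_right_mono)
    have "0 \<le> L * \<bar>y\<bar>" using L[of y 0] abs_ge_zero[of "h y - h 0"] by simp
    then show "0 \<le> L * (\<bar>y\<bar> * \<pp> y)" using p_nonneg[of y] by (simp add: mult.assoc[symmetric])
  qed
  also have "\<dots> = L * Mpi" by (simp add: Mpi_def)
  finally show ?thesis .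
qed

end

locale ar1k = ar1 +
  fixes \<delta> :: "nat \<Rightarrow> real" and k :: nat and \<pi>v :: "nat option \<Rightarrow> real"
  assumes k1: "1 \<le> k" and dpos: "0 < \<delta> k"
    and dint: "\<exists>n::nat. 2 * real k / \<delta> k = real n"
    and stat: "is_stationary \<rho> \<nu> \<delta> k \<pi>v"
begin

abbreviation "d \<equiv> \<delta> k"
abbreviation "q \<equiv> qnum \<delta> k"
abbreviation "pm \<equiv> pmin \<rho> \<nu> \<delta> k"
abbreviation "mf \<equiv> mfun \<rho> \<nu> \<delta> k"
abbreviation "C i \<equiv> cell \<delta> k i"
abbreviation "\<pi>s i \<equiv> \<pi>v (Some i)"

lemma qd: "real q * d = 2 * real k"
proof -
  obtain n :: nat where n: "2 * real k / d = real n" using dint by blast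
  then have "q = n" by (simp add: qnum_def)
  then show ?thesis using n dpos by (simp add: field_simps)
qed

lemma cell_eq: "C i = {- real k + real i * d ..< - real k + real i * d + d}"
  by (simp add: cell_def grid_x_def algebra_simps)

lemma cell_ne: "C i \<noteq> {}" using dpos by (simp add: cell_eq)

lemma cell_sub: assumes "i < q" shows "C i \<subseteq> {- real k ..< real k}"
proof -
  have "real i + 1 \<le> real q" using assms by simp
  then have "(real i + 1) * d \<le> real q * d" using dpos by (intro mult_right_mono) auto
  then have "real i * d + d \<le> 2 * real k" using qd by (simp add: algebra_simps)
  then show ?thesis unfolding cell_eq using dpos by auto
qed

lemma cell_iff: "x \<in> C i \<longleftrightarrow> \<lfloor>(x + real k) / d\<rfloor> = int i"
proof -
  have "x \<in> C i \<longleftrightarrow> real i \<le> (x + real k) / d \<and> (x + real k) / d < real i + 1"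
    unfolding cell_eq using dpos by (auto simp: field_simps)
  also have "\<dots> \<longleftrightarrow> \<lfloor>(x + real k) / d\<rfloor> = int i" by (simp add: floor_eq_iff)
  finally show ?thesis .
qed

lemma cell_sum: "(\<Sum>i<q. indicator (C i) x) = (indicator {- real k ..< real k} x :: real)"
proof (cases "x \<in> {- real k ..< real k}")
  case True
  define j where "j = nat \<lfloor>(x + real k) / d\<rfloor>"
  have fl0: "0 \<le> \<lfloor>(x + real k) / d\<rfloor>" using True dpos by auto
  then have xj: "x \<in> C j" by (simp add: cell_iff j_def)
  have uniq: "x \<in> C i \<longleftrightarrow> i = j" for i
    using fl0 by (auto simp: cell_iff j_def)
  have "j < q"
  proof (rule ccontr)
    assume "\<not> j < q"
    then have "real q \<le> real j" by simp
    then have "real q * d \<le> real j * d" using dpos by (intro mult_right_mono) auto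
    then show False using xj True qd unfolding cell_eq by auto
  qed
  have "(\<Sum>i<q. indicator (C i) x) = (\<Sum>i<q. if i = j then 1 else (0::real))"
    by (rule sum.cong) (auto simp: uniq split: split_indicator)
  also have "\<dots> = 1" using \<open>j < q\<close> by simp
  finally show ?thesis using True by simp
next
  case False
  then have "x \<notin> C i" if "i < q" for i using cell_sub[OF that] by auto
  then show ?thesis using False by (auto intro!: sum.neutral split: split_indicator)
qed

lemma zero_in_box: "(0::real) \<in> {- real k ..< real k}" using k1 by auto

lemma pm_def': "pm i y = (INF t\<in>C i. \<nu> (y - \<rho> * t))" by (simp add: pmin_def)

lemma nu_cont: "isCont \<nu> t" using nu_deriv[of t] by (rule DERIV_isCont)

lemma pm_bdd: "bdd_below ((\<lambda>t. \<nu> (y - \<rho> * t)) ` X)"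
  using nu_nonneg by (auto intro: bdd_belowI[of _ 0])

lemma pm_nonneg: "0 \<le> pm i y"
  unfolding pm_def' by (rule cINF_greatest[OF cell_ne]) (simp add: nu_nonneg)

lemma pm_le: "t \<in> C i \<Longrightarrow> pm i y \<le> \<nu> (y - \<rho> * t)"
  unfolding pm_def' by (rule cINF_lower[OF pm_bdd])

lemma pm_ge: assumes x: "x \<in> C i"
  shows "\<nu> (y - \<rho> * x) - G (\<bar>\<rho>\<bar> * d) (y - \<rho> * x) \<le> pm i y"
  unfolding pm_def'
proof (rule cINF_greatest[OF cell_ne])
  fix t assume t: "t \<in> C i"
  have "\<bar>x - t\<bar> \<le> d" using x t unfolding cell_eq by auto
  then have "\<bar>\<rho> * x - \<rho> * t\<bar> \<le> \<bar>\<rho>\<bar> * d"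
    by (simp add: right_diff_distrib[symmetric] abs_mult mult_left_mono)
  then have "\<bar>\<nu> ((y - \<rho> * x) + (\<rho> * x - \<rho> * t)) - \<nu> (y - \<rho> * x)\<bar> \<le> G (\<bar>\<rho>\<bar> * d) (y - \<rho> * x)"
    by (rule nu_diff_le)
  then show "\<nu> (y - \<rho> * x) - G (\<bar>\<rho>\<bar> * d) (y - \<rho> * x) \<le> \<nu> (y - \<rho> * t)" by simp
qed

lemma pm_meas[measurable]: "pm i \<in> borel_measurable borel"
proof -
  have eq: "pm i y = (INF t\<in>C i \<inter> \<rat>. \<nu> (y - \<rho> * t))" for y
    unfolding pm_def' cell_eq
    by (rule INF_rat_eq) (use dpos in \<open>auto intro!: continuous_intros isCont_o2[OF _ nu_cont] simp: nu_nonneg\<close>)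
  have "(\<lambda>y. INF t\<in>C i \<inter> \<rat>. \<nu> (y - \<rho> * t)) \<in> borel_measurable borel"
    by (rule borel_measurable_cINF_real) (auto intro: countable_subset[OF _ countable_rat])
  then show ?thesis by (simp add: eq[abs_def])
qed

lemma grid_in: "grid_x \<delta> k i \<in> C i"
  using dpos by (simp add: cell_def grid_x_def)

lemma pm_bdd_int:
  assumes [measurable]: "F \<in> borel_measurable borel" and b: "\<And>y. \<bar>F y\<bar> \<le> B"
    and [measurable]: "A \<in> sets borel"
  shows "integrable lborel (\<lambda>y. indicator A y * F y * pm i y)"
proof (rule Bochner_Integration.integrable_bound[OF integrable_mult_right[OF nu_shift_int, of B "\<rho> * grid_x \<delta> k i"]])
  show "AE y in lborel. norm (indicator A y * F y * pm i y) \<le> norm (B * \<nu> (y - \<rho> * grid_x \<delta> k i))"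
  proof (rule AE_I2)
    fix y
    have "\<bar>indicator A y * F y * pm i y\<bar> \<le> B * \<nu> (y - \<rho> * grid_x \<delta> k i)"
      using b[of y] pm_nonneg[of i y] pm_le[OF grid_in, of i y]
      by (auto simp: abs_mult split: split_indicator intro!: mult_mono)
    then show "norm (indicator A y * F y * pm i y) \<le> norm (B * \<nu> (y - \<rho> * grid_x \<delta> k i))" by simp
  qed
qed measurable

subsection \<open>Stationary vector\<close>

lemma Jset_sum: "(\<Sum>j\<in>Jset \<delta> k. f j) = (\<Sum>i<q. f (Some i)) + f None"
proof -
  have "(\<Sum>j\<in>Jset \<delta> k. f j) = (\<Sum>j\<in>Some ` {..<q}. f j) + (\<Sum>j\<in>{None}. f j)"
    unfolding Jset_def by (rule sum.union_disjoint) auto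
  also have "(\<Sum>j\<in>Some ` {..<q}. f j) = (\<Sum>i<q. f (Some i))"
    by (rule sum.reindex_cong[of Some]) (auto simp: inj_on_def)
  finally show ?thesis by simp
qed

lemma Bmat_None: "Bmat \<rho> \<nu> \<delta> k a None = 0" by (cases a) (simp_all add: Bmat_def)
lemma Bmat_SS: "Bmat \<rho> \<nu> \<delta> k (Some i) (Some j) =
   mf i (indicator (C j)) + indicator (C j) (0::real) * (1 - mf i (\<lambda>_. 1))"
  by (simp add: Bmat_def)
lemma Bmat_NS: "Bmat \<rho> \<nu> \<delta> k None (Some j) = indicator (C j) (0::real)"
  by (simp add: Bmat_def)

lemma stat': "\<And>j. j \<in> Jset \<delta> k \<Longrightarrow> 0 \<le> \<pi>v j" "(\<Sum>j\<in>Jset \<delta> k. \<pi>v j) = 1"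
  "\<And>j. j \<in> Jset \<delta> k \<Longrightarrow> (\<Sum>i\<in>Jset \<delta> k. \<pi>v i * Bmat \<rho> \<nu> \<delta> k i j) = \<pi>v j"
  using stat unfolding is_stationary_def by auto

lemma piNone: "\<pi>v None = 0"
  using stat'(3)[of None] by (simp add: Jset_def Bmat_None)

lemma pis_nonneg: "i < q \<Longrightarrow> 0 \<le> \<pi>s i"
  using stat'(1)[of "Some i"] by (simp add: Jset_def)

lemma pis_sum: "(\<Sum>i<q. \<pi>s i) = 1"
  using stat'(2) by (simp add: Jset_sum piNone)

lemma pis_fix: assumes "j < q"
  shows "\<pi>s j = (\<Sum>i<q. \<pi>s i * (mf i (indicator (C j)) + indicator (C j) (0::real) * (1 - mf i (\<lambda>_. 1))))"
proof -
  have "Some j \<in> Jset \<delta> k" by (simp add: Jset_def assms)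
  from stat'(3)[OF this] show ?thesis by (simp add: Jset_sum Bmat_SS Bmat_NS piNone)
qed

abbreviation "pd \<equiv> pdens_k \<rho> \<nu> \<delta> k \<pi>v"

lemma pd_nonneg: "0 \<le> pd y"
  unfolding pdens_k_def by (auto intro!: sum_nonneg mult_nonneg_nonneg pis_nonneg pm_nonneg)

lemma pd_meas[measurable]: "pd \<in> borel_measurable borel"
  unfolding pdens_k_def by measurable

lemma pd_out: "y \<notin> {- real k ..< real k} \<Longrightarrow> pd y = 0"
  unfolding pdens_k_def by simp

lemma mf_alt:
  assumes [measurable]: "F \<in> borel_measurable borel" and b: "\<And>y. \<bar>F y\<bar> \<le> B"
  shows "(\<integral>y. indicator {- real k ..< real k} y * F y * pm i y \<partial>lborel) = mf i F"
  unfolding mfun_def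
  by (rule integral_discrete_difference[where X = "{real k}"]) (auto split: split_indicator)

lemma int_F_pd:
  assumes [measurable]: "F \<in> borel_measurable borel" and b: "\<And>y. \<bar>F y\<bar> \<le> B"
  shows "integrable lborel (\<lambda>y. F y * pd y)"
    and "(\<integral>y. F y * pd y \<partial>lborel) = (\<Sum>i<q. \<pi>s i * mf i F)"
proof -
  have eq: "F y * pd y = (\<Sum>i<q. \<pi>s i * (indicator {- real k ..< real k} y * F y * pm i y))" for y
    unfolding pdens_k_def by (simp add: sum_distrib_left mult_ac)
  have int: "integrable lborel (\<lambda>y. \<pi>s i * (indicator {- real k ..< real k} y * F y * pm i y))" for i
    by (intro integrable_mult_right pm_bdd_int[OF assms]) simp
  show "integrable lborel (\<lambda>y. F y * pd y)"
    unfolding eq by (intro Bochner_Integration.integrable_sum int)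
  have "(\<integral>y. F y * pd y \<partial>lborel) = (\<Sum>i<q. \<integral>y. \<pi>s i * (indicator {- real k ..< real k} y * F y * pm i y) \<partial>lborel)"
    unfolding eq by (rule Bochner_Integration.integral_sum) (rule int)
  also have "\<dots> = (\<Sum>i<q. \<pi>s i * mf i F)"
    by (simp add: mf_alt[OF assms])
  finally show "(\<integral>y. F y * pd y \<partial>lborel) = (\<Sum>i<q. \<pi>s i * mf i F)" .
qed

lemma pd_int: "integrable lborel pd"
  using int_F_pd(1)[of "\<lambda>_. 1" 1] by simp

lemma pd_integral: "(\<integral>y. pd y \<partial>lborel) = (\<Sum>i<q. \<pi>s i * mf i (\<lambda>_. 1))"
  using int_F_pd(2)[of "\<lambda>_. 1" 1] by simp

lemma mf1_le: "mf i (\<lambda>_. 1) \<le> 1"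
proof -
  have "mf i (\<lambda>_. 1) \<le> (\<integral>y. \<nu> (y - \<rho> * grid_x \<delta> k i) \<partial>lborel)"
    unfolding mfun_def
    by (rule integral_mono[OF pm_bdd_int[of "\<lambda>_. 1" 1] nu_shift_int])
       (auto intro: order_trans[OF _ pm_le[OF grid_in]] simp: pm_nonneg split: split_indicator)
  then show ?thesis by (simp add: nu_shift_one)
qed

definition c0 :: real where "c0 = 1 - (\<integral>y. pd y \<partial>lborel)"

lemma c0_eq: "c0 = (\<Sum>i<q. \<pi>s i * (1 - mf i (\<lambda>_. 1)))"
  unfolding c0_def pd_integral using pis_sum
  by (simp add: right_diff_distrib sum_subtractf)

lemma c0_nonneg: "0 \<le> c0"
  unfolding c0_eq by (intro sum_nonneg mult_nonneg_nonneg pis_nonneg) (auto simp: mf1_le)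

lemma cell_int: assumes "j < q"
  shows "(\<integral>y. indicator (C j) y * pd y \<partial>lborel) = \<pi>s j - indicator (C j) (0::real) * c0"
proof -
  have "(\<integral>y. indicator (C j) y * pd y \<partial>lborel) = (\<Sum>i<q. \<pi>s i * mf i (indicator (C j)))"
    by (rule int_F_pd(2)[of _ 1]) (auto simp: cell_def split: split_indicator)
  also have "\<dots> = \<pi>s j - indicator (C j) (0::real) * c0"
    unfolding pis_fix[OF assms] c0_eq
    by (simp add: distrib_left sum.distrib sum_distrib_left mult_ac)
  finally show ?thesis .
qed

definition hat :: "(real \<Rightarrow> real) \<Rightarrow> real" where
  "hat F = (\<integral>y. F y * pd y \<partial>lborel) + (1 - (\<integral>y. pd y \<partial>lborel)) * F 0"

lemma hat_sum:
  assumes [measurable]: "F \<in> borel_measurable borel" and b: "\<And>y. \<bar>F y\<bar> \<le> B"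
  shows "hat F = (\<Sum>i<q. \<pi>s i * mf i F) + c0 * F 0"
  unfolding hat_def c0_def[symmetric] int_F_pd(2)[OF assms] ..

lemma cell_lemma:
  assumes [measurable]: "F \<in> borel_measurable borel" and b: "\<And>y. \<bar>F y\<bar> \<le> B"
    and a: "\<And>i x. i < q \<Longrightarrow> x \<in> C i \<Longrightarrow> a i \<le> F x"
  shows "(\<Sum>i<q. \<pi>s i * a i) \<le> hat F"
proof -
  have Cm[measurable]: "C i \<in> sets borel" for i by (simp add: cell_def)
  have intC: "integrable lborel (\<lambda>y. indicator (C i) y * pd y * G y)" if "\<And>y. \<bar>G y\<bar> \<le> B'"
    and [measurable]: "G \<in> borel_measurable borel" for i G B'
  proof -
    have "0 \<le> B'" using that(1)[of 0] by (meson abs_ge_zero order_trans)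
    have "integrable lborel (\<lambda>y. (indicator (C i) y * G y) * pd y)"
      by (rule int_F_pd(1)[where B = B']) (use that \<open>0 \<le> B'\<close> in \<open>auto split: split_indicator\<close>)
    then show ?thesis by (simp add: mult_ac)
  qed
  have step: "\<pi>s i * a i \<le> (\<integral>y. indicator (C i) y * pd y * F y \<partial>lborel) + indicator (C i) (0::real) * c0 * F 0"
    if i: "i < q" for i
  proof -
    have pe: "\<pi>s i = (\<integral>y. indicator (C i) y * pd y \<partial>lborel) + indicator (C i) (0::real) * c0"
      using cell_int[OF i] by simp
    have e1: "(\<integral>y. indicator (C i) y * pd y \<partial>lborel) * a i = (\<integral>y. indicator (C i) y * pd y * a i \<partial>lborel)"
      by simp
    have i1: "(\<integral>y. indicator (C i) y * pd y * a i \<partial>lborel) \<le> (\<integral>y. indicator (C i) y * pd y * F y \<partial>lborel)"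
    proof (rule integral_mono)
      show "integrable lborel (\<lambda>y. indicator (C i) y * pd y * a i)"
        using intC[of "\<lambda>_. a i" "\<bar>a i\<bar>" i] by simp
      show "integrable lborel (\<lambda>y. indicator (C i) y * pd y * F y)" using intC[OF b] by simp
    qed (use a[OF i] pd_nonneg in \<open>auto split: split_indicator intro!: mult_left_mono\<close>)
    have i2: "indicator (C i) (0::real) * c0 * a i \<le> indicator (C i) (0::real) * c0 * F 0"
      using a[OF i, of 0] c0_nonneg by (auto split: split_indicator intro!: mult_left_mono)
    have "\<pi>s i * a i = (\<integral>y. indicator (C i) y * pd y \<partial>lborel) * a i + indicator (C i) (0::real) * c0 * a i"
      unfolding pe by (simp only: distrib_right)
    then show ?thesis using e1 i1 i2 by linarith
  qed
  have "(\<Sum>i<q. \<pi>s i * a i) \<le> (\<Sum>i<q. (\<integral>y. indicator (C i) y * pd y * F y \<partial>lborel) + indicator (C i) (0::real) * c0 * F 0)"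
    by (rule sum_mono) (rule step, simp)
  also have "\<dots> = (\<integral>y. (\<Sum>i<q. indicator (C i) y) * pd y * F y \<partial>lborel) + (\<Sum>i<q. indicator (C i) (0::real)) * c0 * F 0"
  proof -
    have "(\<Sum>i<q. (\<integral>y. indicator (C i) y * pd y * F y \<partial>lborel)) = (\<integral>y. (\<Sum>i<q. indicator (C i) y * pd y * F y) \<partial>lborel)"
      by (rule Bochner_Integration.integral_sum[symmetric]) (rule intC[OF b], simp)
    also have "\<dots> = (\<integral>y. (\<Sum>i<q. indicator (C i) y) * pd y * F y \<partial>lborel)"
      by (simp only: sum_distrib_right)
    finally have 1: "(\<Sum>i<q. (\<integral>y. indicator (C i) y * pd y * F y \<partial>lborel)) = (\<integral>y. (\<Sum>i<q. indicator (C i) y) * pd y * F y \<partial>lborel)" .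
    have 2: "(\<Sum>i<q. indicator (C i) (0::real) * c0 * F 0) = (\<Sum>i<q. indicator (C i) (0::real)) * c0 * F 0"
      by (simp only: sum_distrib_right)
    show ?thesis by (simp only: sum.distrib 1 2)
  qed
  also have "\<dots> = (\<integral>y. F y * pd y \<partial>lborel) + c0 * F 0"
  proof -
    have "(\<lambda>y. (\<Sum>i<q. indicator (C i) y) * pd y * F y) = (\<lambda>y. F y * pd y)"
      by (rule ext) (auto simp: cell_sum pd_out split: split_indicator)
    moreover have "(\<Sum>i<q. indicator (C i) (0::real)) = (1::real)"
      using cell_sum[of 0] zero_in_box by simp
    ultimately show ?thesis by simp
  qed
  also have "\<dots> = hat F" unfolding hat_def c0_def by simp
  finally show ?thesis .
qed

lemma hat_lin:
  assumes [measurable]: "F \<in> borel_measurable borel" "\<And>y. \<bar>F y\<bar> \<le> B"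
    and [measurable]: "E \<in> borel_measurable borel" "\<And>y. \<bar>E y\<bar> \<le> B'"
  shows "hat (\<lambda>x. \<alpha> * F x + \<beta> * E x) = \<alpha> * hat F + \<beta> * hat E"
proof -
  have "(\<integral>y. (\<alpha> * F y + \<beta> * E y) * pd y \<partial>lborel) = \<alpha> * (\<integral>y. F y * pd y \<partial>lborel) + \<beta> * (\<integral>y. E y * pd y \<partial>lborel)"
    using int_F_pd(1)[OF assms(1,2)] int_F_pd(1)[OF assms(3,4)]
    by (simp add: distrib_right mult.assoc)
  then show ?thesis unfolding hat_def by (simp add: algebra_simps)
qed

lemma hat_const: "hat (\<lambda>_. b) = b"
  unfolding hat_def using pd_int by (simp add: algebra_simps)

lemma hat_mono:
  assumes [measurable]: "F \<in> borel_measurable borel" "\<And>y. \<bar>F y\<bar> \<le> B"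
    and [measurable]: "E \<in> borel_measurable borel" "\<And>y. \<bar>E y\<bar> \<le> B'"
    and le: "\<And>x. x \<in> {- real k ..< real k} \<Longrightarrow> F x \<le> E x"
  shows "hat F \<le> hat E"
proof -
  have "(\<integral>y. F y * pd y \<partial>lborel) \<le> (\<integral>y. E y * pd y \<partial>lborel)"
  proof (rule integral_mono[OF int_F_pd(1)[OF assms(1,2)] int_F_pd(1)[OF assms(3,4)]])
    fix y show "F y * pd y \<le> E y * pd y"
      using le[of y] pd_out[of y] pd_nonneg[of y] by (cases "y \<in> {- real k ..< real k}") (auto intro: mult_right_mono)
  qed
  moreover have "F 0 \<le> E 0" using le zero_in_box by simp
  ultimately show ?thesis
    unfolding hat_def c0_def[symmetric] using c0_nonneg by (simp add: add_mono mult_left_mono)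
qed

definition Vk :: "real \<Rightarrow> real" where "Vk x = indicator {- real k .. real k} x * \<bar>x\<bar> powr m"

lemma Vk_meas[measurable]: "Vk \<in> borel_measurable borel" unfolding Vk_def by measurable

lemma Vk_bdd: "\<bar>Vk x\<bar> \<le> real k powr m"
  unfolding Vk_def using m by (auto split: split_indicator intro!: powr_mono2)

lemma Vk_nonneg: "0 \<le> Vk x" unfolding Vk_def by simp

lemma Vk_box: assumes "x \<in> C i" "i < q" shows "Vk x = \<bar>x\<bar> powr m"
proof -
  have "x \<in> {- real k .. real k}" using cell_sub[OF assms(2)] assms(1) by auto
  then show ?thesis unfolding Vk_def by simp
qed

definition Rv :: real where "Rv = Lc / (1 - lam)"

lemma Rv_nonneg: "0 \<le> Rv" unfolding Rv_def using Lc_nonneg lam_less by simp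

lemma Rv_eq: "lam * Rv + Lc = Rv"
  unfolding Rv_def using lam_less by (simp add: field_simps)

lemma mf_W: assumes x: "x \<in> C i"
  shows "mf i Vk \<le> lam * \<bar>x\<bar> powr m + Lc"
proof -
  have "mf i Vk \<le> (\<integral>y. \<bar>y\<bar> powr m * \<nu> (y - \<rho> * x) \<partial>lborel)"
    unfolding mfun_def
  proof (rule integral_mono[OF pm_bdd_int[OF Vk_meas Vk_bdd] W_int])
    fix y
    have "Vk y * pm i y \<le> \<bar>y\<bar> powr m * \<nu> (y - \<rho> * x)"
      unfolding Vk_def using pm_le[OF x, of y] pm_nonneg[of i y]
      by (auto split: split_indicator intro!: mult_left_mono)
    then show "indicator {- real k..real k} y * Vk y * pm i y \<le> \<bar>y\<bar> powr m * \<nu> (y - \<rho> * x)"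
      using Vk_nonneg[of y] pm_nonneg[of i y]
      by (auto split: split_indicator intro: order_trans[rotated])
  qed simp
  also have "\<dots> \<le> lam * \<bar>x\<bar> powr m + Lc" by (rule W_bound)
  finally show ?thesis .
qed

lemma hat_Vk: "hat Vk \<le> Rv"
proof -
  have Vk0: "Vk 0 = 0" using m by (simp add: Vk_def)
  have "hat Vk = (\<Sum>i<q. \<pi>s i * mf i Vk)"
    using hat_sum[OF Vk_meas Vk_bdd] Vk0 by simp
  also have "\<dots> \<le> hat (\<lambda>x. lam * Vk x + Lc * 1)"
  proof (rule cell_lemma)
    show "(\<lambda>x. lam * Vk x + Lc * 1) \<in> borel_measurable borel" by measurable
    show "\<bar>lam * Vk x + Lc * 1\<bar> \<le> lam * real k powr m + Lc" for x
      using Vk_bdd[of x] Vk_nonneg[of x] lam_nonneg Lc_nonneg by (auto intro!: mult_left_mono)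
    fix i x assume "i < q" "x \<in> C i"
    then show "mf i Vk \<le> lam * Vk x + Lc * 1" using mf_W Vk_box by simp
  qed
  also have "\<dots> = lam * hat Vk + Lc"
    using hat_lin[OF Vk_meas Vk_bdd, of "\<lambda>_. 1" 1 lam Lc] hat_const[of 1] by simp
  finally have "(1 - lam) * hat Vk \<le> Lc" by (simp add: algebra_simps)
  then show ?thesis unfolding Rv_def using lam_less by (simp add: field_simps)
qed

lemma one_minus_mf: assumes x: "x \<in> C i"
  shows "1 - mf i (\<lambda>_. 1) \<le> real k powr (- m) * (lam * \<bar>x\<bar> powr m + Lc) + 2 * (\<bar>\<rho>\<bar> * d) * I1"
proof -
  let ?a = "\<bar>\<rho>\<bar> * d"
  have a0: "0 \<le> ?a" using dpos by simp
  have int1: "integrable lborel (\<lambda>y. indicator {- real k..real k} y * 1 * pm i y)"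
    by (rule pm_bdd_int[of "\<lambda>_. 1" 1]) auto
  have "1 - mf i (\<lambda>_. 1) = (\<integral>y. \<nu> (y - \<rho> * x) - indicator {- real k..real k} y * 1 * pm i y \<partial>lborel)"
    unfolding mfun_def using int1 nu_shift_int by (simp add: Bochner_Integration.integral_diff nu_shift_one)
  also have "\<dots> \<le> (\<integral>y. real k powr (- m) * (\<bar>y\<bar> powr m * \<nu> (y - \<rho> * x)) + G ?a (y - \<rho> * x) \<partial>lborel)"
  proof (rule integral_mono)
    show "integrable lborel (\<lambda>y. \<nu> (y - \<rho> * x) - indicator {- real k..real k} y * 1 * pm i y)"
      using int1 nu_shift_int by simp
    show "integrable lborel (\<lambda>y. real k powr (- m) * (\<bar>y\<bar> powr m * \<nu> (y - \<rho> * x)) + G ?a (y - \<rho> * x))"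
      using a0 by (intro Bochner_Integration.integrable_add integrable_mult_right W_int G_shift_int)
    fix y
    have t0: "0 \<le> real k powr (- m) * (\<bar>y\<bar> powr m * \<nu> (y - \<rho> * x))" by (simp add: nu_nonneg)
    show "\<nu> (y - \<rho> * x) - indicator {- real k..real k} y * 1 * pm i y
          \<le> real k powr (- m) * (\<bar>y\<bar> powr m * \<nu> (y - \<rho> * x)) + G ?a (y - \<rho> * x)"
    proof (cases "y \<in> {- real k..real k}")
      case True then show ?thesis using pm_ge[OF x, of y] t0 by simp
    next
      case False
      then have yk: "real k \<le> \<bar>y\<bar>" by auto
      have kpos: "0 < real k" using k1 by simp
      have "1 \<le> (\<bar>y\<bar> / real k) powr m"
        using yk kpos m by (intro ge_one_powr_ge_zero) (auto simp: field_simps)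
      also have "(\<bar>y\<bar> / real k) powr m = \<bar>y\<bar> powr m / real k powr m"
        by (rule powr_divide) 
      also have "\<dots> = real k powr (- m) * \<bar>y\<bar> powr m"
        by (simp add: powr_minus divide_inverse mult.commute)
      finally have one: "1 \<le> real k powr (- m) * \<bar>y\<bar> powr m" .
      have "\<nu> (y - \<rho> * x) \<le> real k powr (- m) * (\<bar>y\<bar> powr m * \<nu> (y - \<rho> * x))"
        using mult_right_mono[OF one nu_nonneg[of "y - \<rho> * x"]]
        by (simp add: mult.assoc)
      then show ?thesis using False G_nonneg[of ?a "y - \<rho> * x"] by simp
    qed
  qed
  also have "\<dots> = real k powr (- m) * (\<integral>y. \<bar>y\<bar> powr m * \<nu> (y - \<rho> * x) \<partial>lborel) + 2 * ?a * I1"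
    using a0 by (subst Bochner_Integration.integral_add) (auto intro!: W_int G_shift_int simp: G_shift_integral)
  also have "\<dots> \<le> real k powr (- m) * (lam * \<bar>x\<bar> powr m + Lc) + 2 * ?a * I1"
    by (intro add_right_mono mult_left_mono W_bound) simp
  finally show ?thesis .
qed

lemma c0_bound: "c0 \<le> real k powr (- m) * Rv + 2 * d * I1"
proof -
  let ?F = "\<lambda>x. (real k powr (- m) * lam) * Vk x + (real k powr (- m) * Lc + 2 * (\<bar>\<rho>\<bar> * d) * I1) * 1"
  have c1: "0 \<le> real k powr (- m) * lam" using lam_nonneg by simp
  have c2: "0 \<le> real k powr (- m) * Lc + 2 * (\<bar>\<rho>\<bar> * d) * I1"
    using Lc_nonneg dpos I1_nonneg by simp
  have "c0 = (\<Sum>i<q. \<pi>s i * (1 - mf i (\<lambda>_. 1)))" by (rule c0_eq)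
  also have "\<dots> \<le> hat ?F"
  proof (rule cell_lemma)
    show "?F \<in> borel_measurable borel" by measurable
    show "\<bar>?F x\<bar> \<le> (real k powr (- m) * lam) * real k powr m + (real k powr (- m) * Lc + 2 * (\<bar>\<rho>\<bar> * d) * I1)" for x
      using Vk_bdd[of x] Vk_nonneg[of x] c1 c2 by (auto intro!: mult_left_mono)
    fix i x assume "i < q" "x \<in> C i"
    then show "1 - mf i (\<lambda>_. 1) \<le> ?F x"
      using one_minus_mf[of x i] Vk_box[of x i] by (simp add: algebra_simps)
  qed
  also have "\<dots> = (real k powr (- m) * lam) * hat Vk + (real k powr (- m) * Lc + 2 * (\<bar>\<rho>\<bar> * d) * I1)"
    using hat_lin[OF Vk_meas Vk_bdd, of "\<lambda>_. 1" 1] hat_const[of 1] by simp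
  also have "\<dots> \<le> (real k powr (- m) * lam) * Rv + (real k powr (- m) * Lc + 2 * (\<bar>\<rho>\<bar> * d) * I1)"
    using hat_Vk c1 by (intro add_right_mono mult_left_mono) auto
  also have "\<dots> = real k powr (- m) * Rv + 2 * (\<bar>\<rho>\<bar> * d) * I1"
  proof -
    have "(real k powr (- m) * lam) * Rv + (real k powr (- m) * Lc + 2 * (\<bar>\<rho>\<bar> * d) * I1)
        = real k powr (- m) * (lam * Rv + Lc) + 2 * (\<bar>\<rho>\<bar> * d) * I1"
      by (simp add: algebra_simps)
    then show ?thesis using Rv_eq by simp
  qed
  also have "\<dots> \<le> real k powr (- m) * Rv + 2 * d * I1"
    using rho dpos I1_nonneg by (intro add_left_mono mult_right_mono) auto
  finally show ?thesis .
qed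

lemma P_cell:
  assumes [measurable]: "g \<in> borel_measurable borel" and b: "\<And>y. \<bar>g y\<bar> \<le> 1" and x: "x \<in> C i"
  shows "\<bar>P g x - (mf i g + (1 - mf i (\<lambda>_. 1)) * g 0)\<bar> \<le> 2 * (1 - mf i (\<lambda>_. 1))"
proof -
  let ?D = "\<lambda>y. \<nu> (y - \<rho> * x) - indicator {- real k..real k} y * 1 * pm i y"
  have int1: "integrable lborel (\<lambda>y. indicator {- real k..real k} y * 1 * pm i y)"
    by (rule pm_bdd_int[of "\<lambda>_. 1" 1]) auto
  have intg: "integrable lborel (\<lambda>y. indicator {- real k..real k} y * g y * pm i y)"
    by (rule pm_bdd_int[OF assms(1) b]) auto
  have Dnn: "0 \<le> ?D y" for y
    using pm_le[OF x, of y] pm_nonneg[of i y] by (auto split: split_indicator)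
  have Dint: "integrable lborel ?D" using int1 nu_shift_int by simp
  have Dval: "(\<integral>y. ?D y \<partial>lborel) = 1 - mf i (\<lambda>_. 1)"
    unfolding mfun_def using int1 nu_shift_int by (simp add: Bochner_Integration.integral_diff nu_shift_one)
  have "P g x - mf i g = (\<integral>y. g y * ?D y \<partial>lborel)"
  proof -
    have "(\<integral>y. g y * ?D y \<partial>lborel) = (\<integral>y. g y * \<nu> (y - \<rho> * x) - indicator {- real k..real k} y * g y * pm i y \<partial>lborel)"
      by (rule Bochner_Integration.integral_cong) (simp_all add: right_diff_distrib)
    also have "\<dots> = P g x - mf i g"
      unfolding P_def mfun_def by (rule Bochner_Integration.integral_diff[OF bdd_int[OF assms(1) b] intg])
    finally show ?thesis by simp
  qed
  then have "\<bar>P g x - mf i g\<bar> \<le> (\<integral>y. \<bar>g y * ?D y\<bar> \<partial>lborel)" by simp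
  also have "\<dots> \<le> (\<integral>y. ?D y \<partial>lborel)"
  proof (rule integral_mono'[OF Dint])
    fix y show "\<bar>g y * ?D y\<bar> \<le> ?D y"
      using b[of y] Dnn[of y] by (simp add: abs_mult mult_left_le_one_le)
    show "0 \<le> ?D y" by (rule Dnn)
  qed
  finally have 1: "\<bar>P g x - mf i g\<bar> \<le> 1 - mf i (\<lambda>_. 1)" using Dval by simp
  have 2: "\<bar>(1 - mf i (\<lambda>_. 1)) * g 0\<bar> \<le> 1 - mf i (\<lambda>_. 1)"
    using b[of 0] mf1_le[of i] by (simp add: abs_mult mult_left_le)
  have "\<bar>(P g x - mf i g) - (1 - mf i (\<lambda>_. 1)) * g 0\<bar> \<le> \<bar>P g x - mf i g\<bar> + \<bar>(1 - mf i (\<lambda>_. 1)) * g 0\<bar>"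
    by (rule abs_triangle_ineq4)
  then show ?thesis using 1 2 by (simp add: algebra_simps)
qed

lemma hat_P:
  assumes [measurable]: "g \<in> borel_measurable borel" and b: "\<And>y. \<bar>g y\<bar> \<le> 1"
  shows "\<bar>hat (P g) - hat g\<bar> \<le> 2 * c0"
proof -
  have Pm[measurable]: "P g \<in> borel_measurable borel" and Pb: "\<And>y. \<bar>P g y\<bar> \<le> 1"
    using Pn_props[OF assms, of 1] by auto
  have hg: "hat g = (\<Sum>i<q. \<pi>s i * (mf i g + (1 - mf i (\<lambda>_. 1)) * g 0))"
    unfolding hat_sum[OF assms] c0_eq by (simp add: distrib_left sum.distrib sum_distrib_right sum_distrib_left mult_ac)
  have c2: "2 * c0 = (\<Sum>i<q. \<pi>s i * (2 * (1 - mf i (\<lambda>_. 1))))"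
    unfolding c0_eq sum_distrib_left by (rule sum.cong) (simp_all add: algebra_simps)
  have lo: "(\<Sum>i<q. \<pi>s i * ((mf i g + (1 - mf i (\<lambda>_. 1)) * g 0) - 2 * (1 - mf i (\<lambda>_. 1)))) \<le> hat (P g)"
  proof (rule cell_lemma[OF Pm Pb])
    fix i x assume "i < q" "x \<in> C i"
    from P_cell[OF assms this(2)] show "(mf i g + (1 - mf i (\<lambda>_. 1)) * g 0) - 2 * (1 - mf i (\<lambda>_. 1)) \<le> P g x"
      by (simp only: abs_le_iff) linarith
  qed
  have hneg: "hat (\<lambda>x. (- 1) * P g x + 0 * P g x) = - hat (P g)"
    using hat_lin[OF Pm Pb Pm Pb, of "-1" 0] by simp
  have "(\<Sum>i<q. \<pi>s i * (- (mf i g + (1 - mf i (\<lambda>_. 1)) * g 0) - 2 * (1 - mf i (\<lambda>_. 1)))) \<le> hat (\<lambda>x. (- 1) * P g x + 0 * P g x)"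
  proof (rule cell_lemma[where B = 1])
    show "(\<lambda>x. (- 1) * P g x + 0 * P g x) \<in> borel_measurable borel" by measurable
    show "\<bar>(- 1) * P g y + 0 * P g y\<bar> \<le> 1" for y using Pb[of y] by simp
    fix i x assume "i < q" "x \<in> C i"
    from P_cell[OF assms this(2)] show "- (mf i g + (1 - mf i (\<lambda>_. 1)) * g 0) - 2 * (1 - mf i (\<lambda>_. 1)) \<le> (- 1) * P g x + 0 * P g x"
      by (simp only: abs_le_iff) linarith
  qed
  then have up: "(\<Sum>i<q. \<pi>s i * (- (mf i g + (1 - mf i (\<lambda>_. 1)) * g 0) - 2 * (1 - mf i (\<lambda>_. 1)))) \<le> - hat (P g)"
    using hneg by simp
  have s1: "(\<Sum>i<q. \<pi>s i * (X i - Y i)) = (\<Sum>i<q. \<pi>s i * X i) - (\<Sum>i<q. \<pi>s i * Y i)" for X Y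
    by (simp add: right_diff_distrib sum_subtractf)
  have s2: "(\<Sum>i<q. \<pi>s i * (- X i - Y i)) = - (\<Sum>i<q. \<pi>s i * X i) - (\<Sum>i<q. \<pi>s i * Y i)" for X Y
    by (simp add: right_diff_distrib sum_subtractf sum_negf)
  have "hat g - 2 * c0 \<le> hat (P g)"
    using lo unfolding s1 hg c2 .
  moreover have "- hat g - 2 * c0 \<le> - hat (P g)"
    using up unfolding s2 hg c2 .
  ultimately show ?thesis by linarith
qed

lemma hat_iter:
  assumes [measurable]: "f \<in> borel_measurable borel" and b: "\<And>y. \<bar>f y\<bar> \<le> 1"
  shows "\<bar>hat ((P ^^ n) f) - hat f\<bar> \<le> 2 * c0 * real n"
proof (induction n)
  case (Suc n)
  have gm: "(P ^^ n) f \<in> borel_measurable borel" and gb: "\<And>y. \<bar>(P ^^ n) f y\<bar> \<le> 1"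
    using Pn_props[OF assms, of n] by auto
  from hat_P[OF gm gb] Suc show ?case by (simp add: algebra_simps)
qed simp

lemma hat_lip:
  assumes [measurable]: "h \<in> borel_measurable borel" and b: "\<And>y. \<bar>h y\<bar> \<le> 1"
    and L: "\<And>x x'. \<bar>h x - h x'\<bar> \<le> L * \<bar>x - x'\<bar>" and L0: "0 \<le> L"
  shows "\<bar>hat h - h 0\<bar> \<le> L * (1 + Rv)"
proof -
  have hb: "\<bar>h y - h 0\<bar> \<le> L * (1 + Vk y)" if "y \<in> {- real k ..< real k}" for y
  proof -
    have "\<bar>h y - h 0\<bar> \<le> L * \<bar>y\<bar>" using L[of y 0] by simp
    also have "\<dots> \<le> L * (1 + Vk y)"
      using that abs_le_powr[of y] L0 by (intro mult_left_mono) (auto simp: Vk_def)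
    finally show ?thesis .
  qed
  have hm: "hat (\<lambda>x. 1 * h x + (- h 0) * 1) = hat h - h 0"
    using hat_lin[OF assms(1) b, of "\<lambda>_. 1" 1 1 "- h 0"] hat_const[of 1] by simp
  have hV: "hat (\<lambda>x. L * Vk x + L * 1) = L * hat Vk + L"
    using hat_lin[OF Vk_meas Vk_bdd, of "\<lambda>_. 1" 1 L L] hat_const[of 1] by simp
  have hV': "hat (\<lambda>x. (- L) * Vk x + (- L) * 1) = - (L * hat Vk + L)"
    using hat_lin[OF Vk_meas Vk_bdd, of "\<lambda>_. 1" 1 "- L" "- L"] hat_const[of 1] by simp
  have Fm: "(\<lambda>x. 1 * h x + (- h 0) * 1) \<in> borel_measurable borel" by measurable
  have Fb: "\<bar>1 * h y + (- h 0) * 1\<bar> \<le> 1 + \<bar>h 0\<bar>" for y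
    using b[of y] abs_triangle_ineq4[of "h y" "h 0"] by simp
  have Em: "(\<lambda>x. L * Vk x + L * 1) \<in> borel_measurable borel" by measurable
  have Eb: "\<bar>L * Vk y + L * 1\<bar> \<le> L * real k powr m + L" for y
  proof -
    have "0 \<le> L * Vk y" using L0 Vk_nonneg[of y] by simp
    moreover have "L * Vk y \<le> L * real k powr m" using Vk_bdd[of y] L0 by (intro mult_left_mono) auto
    ultimately show ?thesis using L0 by simp
  qed
  have E'm: "(\<lambda>x. (- L) * Vk x + (- L) * 1) \<in> borel_measurable borel" by measurable
  have E'b: "\<bar>(- L) * Vk y + (- L) * 1\<bar> \<le> L * real k powr m + L" for y
    using Eb[of y] by (simp add: abs_minus_commute)
  have "hat (\<lambda>x. 1 * h x + (- h 0) * 1) \<le> hat (\<lambda>x. L * Vk x + L * 1)"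
  proof (rule hat_mono[OF Fm Fb Em Eb])
    fix x assume "x \<in> {- real k ..< real k}"
    from hb[OF this] show "1 * h x + (- h 0) * 1 \<le> L * Vk x + L * 1"
      by (simp add: abs_le_iff algebra_simps)
  qed
  moreover have "hat (\<lambda>x. (- L) * Vk x + (- L) * 1) \<le> hat (\<lambda>x. 1 * h x + (- h 0) * 1)"
  proof (rule hat_mono[OF E'm E'b Fm Fb])
    fix x assume "x \<in> {- real k ..< real k}"
    from hb[OF this] show "(- L) * Vk x + (- L) * 1 \<le> 1 * h x + (- h 0) * 1"
      by (simp add: abs_le_iff algebra_simps)
  qed
  ultimately have "\<bar>hat h - h 0\<bar> \<le> L * hat Vk + L" using hm hV hV' by linarith
  also have "\<dots> \<le> L * (1 + Rv)" using hat_Vk L0 by (simp add: algebra_simps mult_left_mono)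
  finally show ?thesis .
qed

lemma main_bound:
  assumes [measurable]: "f \<in> borel_measurable borel" and b: "\<And>y. \<bar>f y\<bar> \<le> 1" and N: "1 \<le> N"
  shows "\<bar>(\<integral>y. f y * \<pp> y \<partial>lborel) - hat f\<bar> \<le> 2 * c0 * real N + 2 * I1 * \<bar>\<rho>\<bar> ^ N * (Mpi + 1 + Rv)"
proof -
  let ?h = "(P ^^ N) f"
  let ?L = "2 * I1 * \<bar>\<rho>\<bar> ^ N"
  have hm: "?h \<in> borel_measurable borel" and hb: "\<And>y. \<bar>?h y\<bar> \<le> 1"
    and hl: "\<And>x x'. \<bar>?h x - ?h x'\<bar> \<le> ?L * \<bar>x - x'\<bar>"
    using Pn_props[OF assms(1,2), of N] N by auto
  have L0: "0 \<le> ?L" using I1_nonneg by simp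
  have e1: "(\<integral>y. f y * \<pp> y \<partial>lborel) = (\<integral>y. ?h y * \<pp> y \<partial>lborel)" by (rule pi_inv_iter[OF assms(1,2)])
  have a: "\<bar>(\<integral>y. ?h y * \<pp> y \<partial>lborel) - ?h 0\<bar> \<le> ?L * Mpi" by (rule pi_lip[OF hm hb hl])
  have b2: "\<bar>hat ?h - ?h 0\<bar> \<le> ?L * (1 + Rv)" by (rule hat_lip[OF hm hb hl L0])
  have c: "\<bar>hat ?h - hat f\<bar> \<le> 2 * c0 * real N" by (rule hat_iter[OF assms(1,2)])
  have "\<bar>(\<integral>y. f y * \<pp> y \<partial>lborel) - hat f\<bar> \<le> ?L * Mpi + ?L * (1 + Rv) + 2 * c0 * real N"
    using a b2 c e1 by linarith
  then show ?thesis by (simp add: algebra_simps)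
qed

lemma tv_facts:
  shows "\<And>N. 1 \<le> N \<Longrightarrow> tv_dist \<pp> pd \<le> 2 * c0 * real N + 2 * I1 * \<bar>\<rho>\<bar> ^ N * (Mpi + 1 + Rv)"
    and "c0 \<le> tv_dist \<pp> pd"
    and "(\<integral>y. \<bar>\<pp> y - pd y\<bar> \<partial>lborel) \<le> tv_dist \<pp> pd + c0"
proof -
  define S where "S = {f :: real \<Rightarrow> real. f \<in> borel_measurable borel \<and> (\<forall>x. \<bar>f x\<bar> \<le> 1)}"
  have tv: "tv_dist \<pp> pd = (SUP f\<in>S. \<bar>(\<integral>y. f y * \<pp> y \<partial>lborel) - hat f\<bar>)"
    by (simp add: tv_dist_def hat_def S_def)
  have Sne: "S \<noteq> {}" unfolding S_def by (auto intro!: exI[of _ "\<lambda>_. 0"])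
  have bnd: "\<bar>(\<integral>y. f y * \<pp> y \<partial>lborel) - hat f\<bar> \<le> 2 * c0 * real N + 2 * I1 * \<bar>\<rho>\<bar> ^ N * (Mpi + 1 + Rv)"
    if "f \<in> S" "1 \<le> N" for f N
    using main_bound[of f N] that unfolding S_def by auto
  have bdd: "bdd_above ((\<lambda>f. \<bar>(\<integral>y. f y * \<pp> y \<partial>lborel) - hat f\<bar>) ` S)"
    by (rule bdd_aboveI2[of _ _ "2 * c0 * real 1 + 2 * I1 * \<bar>\<rho>\<bar> ^ 1 * (Mpi + 1 + Rv)"]) (rule bnd, auto)
  show "tv_dist \<pp> pd \<le> 2 * c0 * real N + 2 * I1 * \<bar>\<rho>\<bar> ^ N * (Mpi + 1 + Rv)" if "1 \<le> N" for N
    unfolding tv by (rule cSUP_least[OF Sne]) (rule bnd[OF _ that])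
  have upper: "\<bar>(\<integral>y. f y * \<pp> y \<partial>lborel) - hat f\<bar> \<le> tv_dist \<pp> pd" if "f \<in> S" for f
    unfolding tv by (rule cSUP_upper[OF that bdd])
  define f0 :: "real \<Rightarrow> real" where "f0 y = 1 - indicator {0::real} y" for y
  have f0S: "f0 \<in> S" unfolding S_def f0_def by (auto split: split_indicator)
  have "(\<integral>y. f0 y * \<pp> y \<partial>lborel) = (\<integral>y. \<pp> y \<partial>lborel)"
    by (rule integral_discrete_difference[where X = "{0}"]) (auto simp: f0_def)
  moreover have "(\<integral>y. f0 y * pd y \<partial>lborel) = (\<integral>y. pd y \<partial>lborel)"
    by (rule integral_discrete_difference[where X = "{0}"]) (auto simp: f0_def)
  ultimately have "\<bar>(\<integral>y. f0 y * \<pp> y \<partial>lborel) - hat f0\<bar> = c0"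
    using c0_nonneg by (simp add: hat_def f0_def p_one c0_def)
  then show "c0 \<le> tv_dist \<pp> pd" using upper[OF f0S] by simp
  define f1 where "f1 y = (if pd y \<le> \<pp> y then 1 else - 1 :: real)" for y
  have f1m[measurable]: "f1 \<in> borel_measurable borel" unfolding f1_def by measurable
  have f1b: "\<And>y. \<bar>f1 y\<bar> \<le> 1" by (simp add: f1_def)
  have f1S: "f1 \<in> S" unfolding S_def using f1b by simp
  have i1: "integrable lborel (\<lambda>y. f1 y * \<pp> y)" by (rule bdd_int_p[OF f1m f1b])
  have i2: "integrable lborel (\<lambda>y. f1 y * pd y)" by (rule int_F_pd(1)[OF f1m f1b])
  have "(\<integral>y. \<bar>\<pp> y - pd y\<bar> \<partial>lborel) = (\<integral>y. f1 y * \<pp> y - f1 y * pd y \<partial>lborel)"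
    by (rule Bochner_Integration.integral_cong) (auto simp: f1_def)
  also have "\<dots> = (\<integral>y. f1 y * \<pp> y \<partial>lborel) - (\<integral>y. f1 y * pd y \<partial>lborel)"
    by (rule Bochner_Integration.integral_diff[OF i1 i2])
  also have "\<dots> = ((\<integral>y. f1 y * \<pp> y \<partial>lborel) - hat f1) + c0 * f1 0"
    by (simp add: hat_def c0_def)
  also have "\<dots> \<le> \<bar>(\<integral>y. f1 y * \<pp> y \<partial>lborel) - hat f1\<bar> + c0"
    using c0_nonneg f1b[of 0] by (intro add_mono abs_ge_self) (auto simp: f1_def)
  also have "\<dots> \<le> tv_dist \<pp> pd + c0" using upper[OF f1S] by simp
  finally show "(\<integral>y. \<bar>\<pp> y - pd y\<bar> \<partial>lborel) \<le> tv_dist \<pp> pd + c0" .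
qed

end

theorem proposition2:
  fixes \<rho> m :: real and \<nu> \<nu>' \<nu>'' \<pp> :: "real \<Rightarrow> real"
    and \<delta> :: "nat \<Rightarrow> real" and \<pi>s :: "nat \<Rightarrow> nat option \<Rightarrow> real"
  assumes rho: "\<bar>\<rho>\<bar> < 1"
    and nu_meas: "\<nu> \<in> borel_measurable borel"
    and nu_nonneg: "\<And>x. 0 \<le> \<nu> x"
    and nu_int: "integrable lborel \<nu>"
    and nu_one: "(\<integral>x. \<nu> x \<partial>lborel) = 1"
    and m: "1 \<le> m"
    and moment: "integrable lborel (\<lambda>x. \<bar>x\<bar> powr m * \<nu> x)"
    and nu_deriv: "\<And>x. (\<nu> has_real_derivative \<nu>' x) (at x)"
    and nu'_cont: "continuous_on UNIV \<nu>'"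
    and nu'_rderiv: "\<And>t. (\<nu>' has_real_derivative \<nu>'' t) (at t within {t..})"
    and I': "integrable lborel (\<lambda>y. \<bar>\<nu>' y\<bar>)"
    and M'': "\<exists>M. \<forall>t. \<bar>\<nu>'' t\<bar> \<le> M"
    and p_meas: "\<pp> \<in> borel_measurable borel"
    and p_nonneg: "\<And>x. 0 \<le> \<pp> x"
    and p_int: "integrable lborel \<pp>"
    and p_one: "(\<integral>x. \<pp> x \<partial>lborel) = 1"
    and p_invariant: "\<And>A. A \<in> sets borel \<Longrightarrow>
        (\<integral>y. indicator A y * \<pp> y \<partial>lborel)
        = (\<integral>x. \<pp> x * (\<integral>y. indicator A y * \<nu> (y - \<rho> * x) \<partial>lborel) \<partial>lborel)"
    and delta_pos: "\<And>k. 1 \<le> k \<Longrightarrow> 0 < \<delta> k"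
    and delta_O: "\<delta> \<in> O(\<lambda>k. 1 / real k)"
    and delta_int: "\<And>k. 1 \<le> k \<Longrightarrow> \<exists>n::nat. 2 * real k / \<delta> k = real n"
    and pis: "\<And>k. 1 \<le> k \<Longrightarrow> is_stationary \<rho> \<nu> \<delta> k (\<pi>s k)"
  shows "(\<lambda>k. tv_dist \<pp> (pdens_k \<rho> \<nu> \<delta> k (\<pi>s k)))
           \<in> O(\<lambda>k. \<bar>ln (real k powr (- m) + \<delta> k)\<bar> * (real k powr (- m) + \<delta> k)) \<and>
         (\<lambda>k. \<integral>y. \<bar>\<pp> y - pdens_k \<rho> \<nu> \<delta> k (\<pi>s k) y\<bar> \<partial>lborel)
           \<in> O(\<lambda>k. \<bar>ln (real k powr (- m) + \<delta> k)\<bar> * (real k powr (- m) + \<delta> k))"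
proof -
  interpret A: ar1 \<rho> m \<nu> \<nu>' \<pp>
    using rho nu_meas nu_nonneg nu_int nu_one m moment nu_deriv nu'_cont I' p_meas p_nonneg p_int p_one p_invariant
    by unfold_locales auto
  define R where "R = A.Lc / (1 - A.lam)"
  define tv where "tv k = tv_dist \<pp> (pdens_k \<rho> \<nu> \<delta> k (\<pi>s k))" for k
  define L1 where "L1 k = (\<integral>y. \<bar>\<pp> y - pdens_k \<rho> \<nu> \<delta> k (\<pi>s k) y\<bar> \<partial>lborel)" for k
  define \<tau> where "\<tau> k = real k powr (- m) + \<delta> k" for k
  have R0: "0 \<le> R" unfolding R_def using A.Lc_nonneg A.lam_less by simp
  have key: "(\<forall>N\<ge>1. tv k \<le> 2 * (real k powr (- m) * R + 2 * \<delta> k * A.I1) * real N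
                + 2 * A.I1 * \<bar>\<rho>\<bar> ^ N * (A.Mpi + 1 + R)) \<and> L1 k \<le> 2 * tv k \<and> 0 \<le> tv k"
    if k: "1 \<le> k" for k
  proof -
    interpret B: ar1k \<rho> m \<nu> \<nu>' \<pp> \<delta> k "\<pi>s k"
      by (intro ar1k.intro A.ar1_axioms ar1k_axioms.intro k delta_pos delta_int pis)
    have RR: "B.Rv = R" by (simp add: B.Rv_def R_def)
    have c0b: "B.c0 \<le> real k powr (- m) * R + 2 * \<delta> k * A.I1" using B.c0_bound RR by simp
    have "tv k \<le> 2 * (real k powr (- m) * R + 2 * \<delta> k * A.I1) * real N
                + 2 * A.I1 * \<bar>\<rho>\<bar> ^ N * (A.Mpi + 1 + R)" if "1 \<le> N" for N
    proof -
      have "tv k \<le> 2 * B.c0 * real N + 2 * A.I1 * \<bar>\<rho>\<bar> ^ N * (A.Mpi + 1 + B.Rv)"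
        unfolding tv_def by (rule B.tv_facts(1)[OF that])
      also have "\<dots> \<le> 2 * (real k powr (- m) * R + 2 * \<delta> k * A.I1) * real N
                + 2 * A.I1 * \<bar>\<rho>\<bar> ^ N * (A.Mpi + 1 + R)"
      proof -
        have "2 * B.c0 * real N \<le> 2 * (real k powr (- m) * R + 2 * \<delta> k * A.I1) * real N"
          using c0b by (intro mult_right_mono) auto
        then show ?thesis unfolding RR by simp
      qed
      finally show ?thesis .
    qed
    moreover have "L1 k \<le> 2 * tv k"
      using B.tv_facts(2,3) unfolding L1_def tv_def by simp
    moreover have "0 \<le> tv k" using B.tv_facts(2) B.c0_nonneg unfolding tv_def by simp
    ultimately show ?thesis by blast
  qed
  obtain c where c: "c > 0" and ev: "eventually (\<lambda>k. norm (\<delta> k) \<le> c * norm (1 / real k)) at_top"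
    using delta_O by (elim landau_o.bigE)
  define lr0 where "lr0 = (if \<rho> = 0 then 1 else - ln \<bar>\<rho>\<bar>)"
  have lr00: "0 < lr0" using rho by (auto simp: lr0_def)
  define A0 where "A0 = R + 2 * A.I1"
  define Cb where "Cb = 2 * A.I1 * (A.Mpi + 1 + R)"
  have A00: "0 \<le> A0" using R0 A.I1_nonneg by (simp add: A0_def)
  have Cb0: "0 \<le> Cb" using R0 A.I1_nonneg A.Mpi_nonneg by (simp add: Cb_def)
  define C1 where "C1 = 2 * A0 / lr0 + 2 * A0 + Cb"
  define K where "K = nat \<lceil>(1 + c) * exp 1\<rceil> + 1"
  have main: "tv k \<le> C1 * (\<bar>ln (\<tau> k)\<bar> * \<tau> k) \<and> L1 k \<le> 2 * C1 * (\<bar>ln (\<tau> k)\<bar> * \<tau> k) \<and> 0 \<le> tv k \<and> 0 < \<tau> k"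
    if kK: "K \<le> k" and dk: "norm (\<delta> k) \<le> c * norm (1 / real k)" for k
  proof -
    have k1: "1 \<le> k" using kK by (simp add: K_def)
    have kpos: "0 < real k" using k1 by simp
    have dpos: "0 < \<delta> k" using delta_pos[OF k1] .
    have kp: "0 < real k powr (- m)" using kpos by simp
    have tpos: "0 < \<tau> k" unfolding \<tau>_def using kp dpos by linarith
    have "real k powr (- m) \<le> real k powr (- 1)"
      using k1 m by (intro powr_mono) auto
    also have "\<dots> = 1 / real k" using kpos by (simp add: powr_minus_divide)
    finally have km: "real k powr (- m) \<le> 1 / real k" .
    have dk': "\<delta> k \<le> c / real k" using dk dpos kpos by simp
    have "(1 + c) * exp 1 < real k"
    proof -
      have "(1 + c) * exp 1 \<le> real (nat \<lceil>(1 + c) * exp 1\<rceil>)" by linarith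
      then show ?thesis using kK unfolding K_def by linarith
    qed
    then have "(1 + c) / real k \<le> exp (- 1)"
      using kpos by (simp add: field_simps exp_minus)
    moreover have "\<tau> k \<le> (1 + c) / real k" using km dk' by (simp add: \<tau>_def add_divide_distrib)
    ultimately have tsmall: "\<tau> k \<le> exp (- 1)" by simp
    have lnt: "ln (\<tau> k) \<le> - 1" using ln_le_cancel_iff[of "\<tau> k" "exp (- 1)"] tsmall tpos by simp
    have lab: "\<bar>ln (\<tau> k)\<bar> = - ln (\<tau> k)" using lnt by simp
    define N where "N = max 1 (nat \<lceil>ln (\<tau> k) / ln \<bar>\<rho>\<bar>\<rceil>)"
    have N1: "1 \<le> N" by (simp add: N_def)
    have NN: "real N \<le> \<bar>ln (\<tau> k)\<bar> / lr0 + 1 \<and> \<bar>\<rho>\<bar> ^ N \<le> \<tau> k"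
    proof (cases "\<rho> = 0")
      case True
      then show ?thesis using tpos lr00 by (simp add: N_def lr0_def)
    next
      case False
      have lr: "ln \<bar>\<rho>\<bar> < 0" using False rho by simp
      define r where "r = ln (\<tau> k) / ln \<bar>\<rho>\<bar>"
      have r0: "0 < r" using lr lnt by (simp add: r_def divide_neg_neg)
      have rl: "r = \<bar>ln (\<tau> k)\<bar> / lr0" using False lab by (simp add: r_def lr0_def)
      have cr: "1 \<le> \<lceil>r\<rceil>" using r0 by simp
      have n1: "1 \<le> nat \<lceil>r\<rceil>" using nat_mono[OF cr] by simp
      have Nn: "N = nat \<lceil>r\<rceil>" unfolding N_def r_def[symmetric] using n1 by (simp add: max_def)
      have NN: "real N = of_int \<lceil>r\<rceil>" unfolding Nn using cr by simp
      have "real N \<le> r + 1" unfolding NN by linarith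
      moreover have "r \<le> real N" unfolding NN by linarith
      then have "\<bar>\<rho>\<bar> ^ N \<le> \<tau> k"
      proof -
        have "\<bar>\<rho>\<bar> ^ N = exp (real N * ln \<bar>\<rho>\<bar>)"
          using False by (simp add: exp_of_nat_mult)
        also have "\<dots> \<le> exp (r * ln \<bar>\<rho>\<bar>)"
          using \<open>r \<le> real N\<close> lr by (intro exp_mono mult_right_mono_neg) auto
        also have "r * ln \<bar>\<rho>\<bar> = ln (\<tau> k)" using lr by (simp add: r_def)
        also have "exp (ln (\<tau> k)) = \<tau> k" using tpos by simp
        finally show ?thesis .
      qed
      ultimately show ?thesis using rl by simp
    qed
    from key[OF k1] have kk: "tv k \<le> 2 * (real k powr (- m) * R + 2 * \<delta> k * A.I1) * real N
                + 2 * A.I1 * \<bar>\<rho>\<bar> ^ N * (A.Mpi + 1 + R)" and l1: "L1 k \<le> 2 * tv k" and tv0: "0 \<le> tv k"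
      using N1 by auto
    have cb: "real k powr (- m) * R + 2 * \<delta> k * A.I1 \<le> A0 * \<tau> k"
    proof -
      have "real k powr (- m) * R \<le> \<tau> k * R" using R0 dpos by (intro mult_right_mono) (auto simp: \<tau>_def)
      moreover have "2 * \<delta> k * A.I1 \<le> 2 * \<tau> k * A.I1" using A.I1_nonneg kp
        by (intro mult_right_mono) (auto simp: \<tau>_def)
      ultimately show ?thesis by (simp add: A0_def algebra_simps)
    qed
    have "tv k \<le> 2 * (A0 * \<tau> k) * real N + Cb * \<tau> k"
    proof -
      have "2 * (real k powr (- m) * R + 2 * \<delta> k * A.I1) * real N \<le> 2 * (A0 * \<tau> k) * real N"
        using cb by (intro mult_right_mono) auto
      moreover have "2 * A.I1 * \<bar>\<rho>\<bar> ^ N * (A.Mpi + 1 + R) \<le> Cb * \<tau> k"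
      proof -
        have "\<bar>\<rho>\<bar> ^ N * Cb \<le> \<tau> k * Cb" using NN Cb0 by (intro mult_right_mono) auto
        moreover have "2 * A.I1 * \<bar>\<rho>\<bar> ^ N * (A.Mpi + 1 + R) = \<bar>\<rho>\<bar> ^ N * Cb"
          unfolding Cb_def by (simp add: mult_ac)
        moreover have "Cb * \<tau> k = \<tau> k * Cb" by (rule mult.commute)
        ultimately show ?thesis by linarith
      qed
      ultimately show ?thesis using kk by simp
    qed
    also have "\<dots> \<le> 2 * (A0 * \<tau> k) * (\<bar>ln (\<tau> k)\<bar> / lr0 + 1) + Cb * \<tau> k"
      using NN A00 tpos by (intro add_right_mono mult_left_mono) auto
    also have "\<dots> = (2 * A0 / lr0) * (\<bar>ln (\<tau> k)\<bar> * \<tau> k) + 2 * A0 * \<tau> k + Cb * \<tau> k"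
      using lr00 by (simp add: field_simps)
    also have "\<dots> \<le> (2 * A0 / lr0) * (\<bar>ln (\<tau> k)\<bar> * \<tau> k) + 2 * A0 * (\<bar>ln (\<tau> k)\<bar> * \<tau> k) + Cb * (\<bar>ln (\<tau> k)\<bar> * \<tau> k)"
    proof -
      have "1 * \<tau> k \<le> \<bar>ln (\<tau> k)\<bar> * \<tau> k" using lnt tpos by (intro mult_right_mono) auto
      then have "\<tau> k \<le> \<bar>ln (\<tau> k)\<bar> * \<tau> k" by simp
      then show ?thesis using A00 Cb0 lr00 by (intro add_mono mult_left_mono) auto
    qed
    also have "\<dots> = C1 * (\<bar>ln (\<tau> k)\<bar> * \<tau> k)" by (simp add: C1_def algebra_simps)
    finally have t1: "tv k \<le> C1 * (\<bar>ln (\<tau> k)\<bar> * \<tau> k)" .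
    then have "L1 k \<le> 2 * C1 * (\<bar>ln (\<tau> k)\<bar> * \<tau> k)" using l1 by simp
    then show ?thesis using t1 tv0 tpos by simp
  qed
  have evK: "eventually (\<lambda>k. K \<le> k) at_top" by (rule eventually_ge_at_top)
  have evm: "eventually (\<lambda>k. tv k \<le> C1 * (\<bar>ln (\<tau> k)\<bar> * \<tau> k) \<and> L1 k \<le> 2 * C1 * (\<bar>ln (\<tau> k)\<bar> * \<tau> k) \<and> 0 \<le> tv k \<and> 0 < \<tau> k) at_top"
    using evK ev by eventually_elim (rule main)
  have "tv \<in> O(\<lambda>k. \<bar>ln (\<tau> k)\<bar> * \<tau> k)"
  proof (rule bigoI[where c = C1])
    show "\<forall>\<^sub>F k in at_top. norm (tv k) \<le> C1 * norm (\<bar>ln (\<tau> k)\<bar> * \<tau> k)"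
      using evm by eventually_elim (auto simp: abs_mult)
  qed
  moreover have "L1 \<in> O(\<lambda>k. \<bar>ln (\<tau> k)\<bar> * \<tau> k)"
  proof (rule bigoI[where c = "2 * C1"])
    show "\<forall>\<^sub>F k in at_top. norm (L1 k) \<le> 2 * C1 * norm (\<bar>ln (\<tau> k)\<bar> * \<tau> k)"
    proof (use evm in eventually_elim)
      case (elim k)
      have "0 \<le> L1 k" unfolding L1_def by (rule integral_nonneg_AE) auto
      then show ?case using elim by (auto simp: abs_mult)
    qed
  qed
  ultimately show ?thesis unfolding tv_def L1_def \<tau>_def by simp
qed

end
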